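(* Let $\mu$ be a probability measure on $\partial\mathbb{D}$ with infinite support whose Christoffel–Darboux kernel $K_n$ satisfies $$\frac{K_n\big(e^{i(\theta+\frac{2\pi a}{n})},e^{i(\theta+\frac{2\pi b}{n})}\big)}{K_n(e^{i\theta},e^{i\theta})}\longrightarrow e^{i\pi(a-\bar b)}\frac{\sin(\pi(a-\bar b))}{\pi(a-\bar b)}\quad(n\to\infty)$$ uniformly for $\theta\in[0,2\pi)$ and $a,b$ in compact subsets of the strip $\{w\in\mathbb{C}:|\mathrm{Im}\,w|<\tfrac12\}$. Let $\{\beta_n\}_{n\ge0}$ be any sequence with $|\beta_n|=1$ and consider the paraorthogonal polynomials $H_n^{(\beta_{n-1})}$. Then for every $e^{i\Theta}\in\partial\mathbb{D}$ and every $j\in\mathbb{Z}$, $$n\big(\theta^{(n)}_{j+1}(\Theta)-\theta^{(n)}_j(\Theta)\big)\longrightarrow2\pi\quad(n\to\infty).$$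
   Context: $\{\varphi_n\}$ are the orthonormal polynomials of $\mu$ ($\varphi_n$ of degree $n$, positive leading coefficient), $\varphi_n^*(z)=z^n\overline{\varphi_n(1/\bar z)}$, $K_n(z,w)=\sum_{k=0}^{n-1}\varphi_k(z)\overline{\varphi_k(w)}$ (the sine expression is interpreted as $1$ when $a-\bar b=0$). For $|\beta|=1$, $H_n^{(\beta)}(z)=z\varphi_{n-1}(z)-\bar\beta\varphi_{n-1}^*(z)$; its zeros are simple and on $\partial\mathbb{D}$. Given $\Theta\in\mathbb{R}$, the zeros of $H_n^{(\beta_{n-1})}$ are written $e^{i\theta^{(n)}_j(\Theta)}$ with real angles labeled so that $\dots<\theta^{(n)}_{-1}(\Theta)<\Theta\le\theta^{(n)}_0(\Theta)<\theta^{(n)}_1(\Theta)<\dots$ (all $2\pi$-translates included, $j\in\mathbb{Z}$). *)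

theory Defs
  imports "HOL-Probability.Probability" "HOL-Computational_Algebra.Polynomial"
begin

definition measure_support :: "complex measure \<Rightarrow> complex set" where
  "measure_support \<mu> = {z. \<forall>e>0. emeasure \<mu> (ball z e) > 0}"

definition prob_measure_on_circle :: "complex measure \<Rightarrow> bool" where
  "prob_measure_on_circle \<mu> \<longleftrightarrow> prob_space \<mu> \<and> sets \<mu> = sets borel \<and>
     emeasure \<mu> (- sphere 0 1) = 0"

definition is_OPUC :: "complex measure \<Rightarrow> (nat \<Rightarrow> complex poly) \<Rightarrow> bool" where
  "is_OPUC \<mu> \<phi> \<longleftrightarrow>
     (\<forall>n. degree (\<phi> n) = n \<and> Im (lead_coeff (\<phi> n)) = 0 \<and> Re (lead_coeff (\<phi> n)) > 0) \<and>
     (\<forall>m n. (\<integral>z. poly (\<phi> m) z * cnj (poly (\<phi> n) z) \<partial>\<mu>) = (if m = n then 1 else 0))"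

text \<open>Reversed polynomial p^*(z) = z^n conj(p(1/conj z)) for a polynomial of degree n.\<close>
definition poly_star :: "nat \<Rightarrow> complex poly \<Rightarrow> complex poly" where
  "poly_star n p = (\<Sum>k\<le>n. monom (cnj (coeff p (n - k))) k)"

definition CD_kernel :: "(nat \<Rightarrow> complex poly) \<Rightarrow> nat \<Rightarrow> complex \<Rightarrow> complex \<Rightarrow> complex" where
  "CD_kernel \<phi> n z w = (\<Sum>k<n. poly (\<phi> k) z * cnj (poly (\<phi> k) w))"

definition sine_kernel :: "complex \<Rightarrow> complex" where
  "sine_kernel w = (if w = 0 then 1
      else exp (\<i> * of_real pi * w) * sin (of_real pi * w) / (of_real pi * w))"

definition paraorth :: "(nat \<Rightarrow> complex poly) \<Rightarrow> nat \<Rightarrow> complex \<Rightarrow> complex poly" where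
  "paraorth \<phi> n \<beta> = [:0, 1:] * \<phi> (n - 1) - smult (cnj \<beta>) (poly_star (n - 1) (\<phi> (n - 1)))"

definition zero_angles :: "(nat \<Rightarrow> complex poly) \<Rightarrow> (nat \<Rightarrow> complex) \<Rightarrow> nat \<Rightarrow> real set" where
  "zero_angles \<phi> \<beta> n = {t. poly (paraorth \<phi> n (\<beta> (n - 1))) (exp (\<i> * of_real t)) = 0}"

text \<open>theta_j^{(n)}(Theta): labeled so that ... < theta_{-1} < Theta <= theta_0 < theta_1 < ...\<close>
definition zero_angle :: "(nat \<Rightarrow> complex poly) \<Rightarrow> (nat \<Rightarrow> complex) \<Rightarrow> nat \<Rightarrow> real \<Rightarrow> int \<Rightarrow> real" where
  "zero_angle \<phi> \<beta> n \<Theta> j =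
     (THE t. t \<in> zero_angles \<phi> \<beta> n \<and>
        (if j \<ge> 0 then \<Theta> \<le> t \<and> int (card (zero_angles \<phi> \<beta> n \<inter> {\<Theta>..<t})) = j
         else t < \<Theta> \<and> int (card (zero_angles \<phi> \<beta> n \<inter> {t..<\<Theta>})) = - j))"

end

theory Submission
  imports Defs "HOL-Computational_Algebra.Fundamental_Theorem_Algebra"
begin


locale opuc =
  fixes \<mu> :: "complex measure" and \<phi> :: "nat \<Rightarrow> complex poly"
  assumes circ: "prob_measure_on_circle \<mu>" and opc: "is_OPUC \<mu> \<phi>"
begin

lemma prob: "prob_space \<mu>" and sets_eq: "sets \<mu> = sets borel"
  and null: "emeasure \<mu> (- sphere 0 1) = 0"
  using circ by (auto simp: prob_measure_on_circle_def)

lemma fin: "finite_measure \<mu>"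
  using prob by (simp add: prob_space_def)

lemma meas_cont:
  assumes "continuous_on UNIV (f :: complex \<Rightarrow> complex)"
  shows "f \<in> borel_measurable \<mu>"
proof -
  show ?thesis
    by (subst measurable_cong_sets[OF sets_eq refl]) (rule borel_measurable_continuous_onI[OF assms])
qed

lemma AE_circ: "AE z in \<mu>. norm z = 1"
proof (rule AE_I')
  show "- sphere 0 1 \<in> null_sets \<mu>"
  proof (rule null_setsI[OF null])
    have "open (- sphere (0::complex) 1)" by (simp add: open_Compl)
    then show "- sphere 0 1 \<in> sets \<mu>" unfolding sets_eq by (rule borel_open)
  qed
  show "{x \<in> space \<mu>. \<not> norm x = 1} \<subseteq> - sphere 0 1" by auto
qed

lemma integ:
  assumes "continuous_on UNIV (f :: complex \<Rightarrow> complex)"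
  shows "integrable \<mu> f"
proof -
  have "compact (f ` sphere 0 1)"
    by (rule compact_continuous_image[OF continuous_on_subset[OF assms]]) auto
  then obtain B where B: "\<And>x. x \<in> f ` sphere 0 1 \<Longrightarrow> norm x \<le> B"
    using compact_imp_bounded[of "f ` sphere 0 1"] unfolding bounded_iff by blast
  have "AE z in \<mu>. norm (f z) \<le> B"
    using AE_circ by eventually_elim (use B in auto)
  then show ?thesis
    using finite_measure.integrable_const_bound[OF fin _ meas_cont[OF assms]] by blast
qed

definition ip :: "complex poly \<Rightarrow> complex poly \<Rightarrow> complex" where
  "ip p q = (LINT z|\<mu>. poly p z * cnj (poly q z))"

lemma cont_pp: "continuous_on UNIV (\<lambda>z. poly p z * cnj (poly q z))"
  by (intro continuous_intros continuous_on_poly continuous_on_cnj continuous_on_id)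

lemma integ_pp: "integrable \<mu> (\<lambda>z. poly p z * cnj (poly q z))"
  by (rule integ[OF cont_pp])

lemma ip_add_left: "ip (p + q) r = ip p r + ip q r"
  unfolding ip_def by (simp add: distrib_right integ_pp)

lemma ip_diff_left: "ip (p - q) r = ip p r - ip q r"
  unfolding ip_def by (simp add: left_diff_distrib integ_pp)

lemma ip_smult_left: "ip (smult c p) r = c * ip p r"
  unfolding ip_def by (simp add: mult.assoc)

lemma ip_conj: "ip q p = cnj (ip p q)"
proof -
  have "(LINT z|\<mu>. cnj (poly p z * cnj (poly q z))) = cnj (LINT z|\<mu>. poly p z * cnj (poly q z))"
    by (rule Bochner_Integration.integral_cnj)
  then have "cnj (ip p q) = (LINT z|\<mu>. cnj (poly p z * cnj (poly q z)))"
    unfolding ip_def by (rule sym)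
  then show ?thesis by (simp add: ip_def mult.commute)
qed

lemma ip_zero_left [simp]: "ip 0 r = 0" by (simp add: ip_def)
lemma ip_zero_right [simp]: "ip r 0 = 0" by (simp add: ip_def)

lemma ip_add_right: "ip r (p + q) = ip r p + ip r q"
proof -
  have "ip r (p+q) = cnj (ip (p+q) r)" "ip r p = cnj (ip p r)" "ip r q = cnj (ip q r)"
    by (rule ip_conj)+
  then show ?thesis by (simp add: ip_add_left)
qed

lemma ip_diff_right: "ip r (p - q) = ip r p - ip r q"
proof -
  have "ip r (p-q) = cnj (ip (p-q) r)" "ip r p = cnj (ip p r)" "ip r q = cnj (ip q r)"
    by (rule ip_conj)+
  then show ?thesis by (simp add: ip_diff_left)
qed

lemma ip_smult_right: "ip r (smult c p) = cnj c * ip r p"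
proof -
  have "ip r (smult c p) = cnj (ip (smult c p) r)" "ip r p = cnj (ip p r)"
    by (rule ip_conj)+
  then show ?thesis by (simp add: ip_smult_left)
qed

lemma ip_sum_left: "ip (\<Sum>k\<in>A. f k) r = (\<Sum>k\<in>A. ip (f k) r)"
  by (induction A rule: infinite_finite_induct) (simp_all add: ip_add_left)

lemma ip_sum_right: "ip r (\<Sum>k\<in>A. f k) = (\<Sum>k\<in>A. ip r (f k))"
  by (induction A rule: infinite_finite_induct) (simp_all add: ip_add_right)

lemma orth: "ip (\<phi> m) (\<phi> n) = (if m = n then 1 else 0)"
  using opc unfolding is_OPUC_def ip_def by blast

lemma deg_phi: "degree (\<phi> n) = n"
  using opc unfolding is_OPUC_def by blast

lemma lead_phi: "lead_coeff (\<phi> n) = of_real (Re (lead_coeff (\<phi> n)))" "Re (lead_coeff (\<phi> n)) > 0"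
proof -
  have "Im (lead_coeff (\<phi> n)) = 0" "Re (lead_coeff (\<phi> n)) > 0"
    using opc unfolding is_OPUC_def by blast+
  then show "lead_coeff (\<phi> n) = of_real (Re (lead_coeff (\<phi> n)))" "Re (lead_coeff (\<phi> n)) > 0"
    by (auto simp: complex_eq_iff)
qed

lemma lead_phi_nz: "lead_coeff (\<phi> n) \<noteq> 0"
  using lead_phi(2)[of n] by auto

end


context opuc begin

lemma span_ex: "degree p \<le> N \<Longrightarrow> \<exists>c. p = (\<Sum>k\<le>N. smult (c k) (\<phi> k))"
proof (induction N arbitrary: p)
  case 0
  have d0: "degree (\<phi> 0) = 0" by (rule deg_phi)
  have "p = smult (coeff p 0 / lead_coeff (\<phi> 0)) (\<phi> 0)"
  proof (rule poly_eqI)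
    fix i show "coeff p i = coeff (smult (coeff p 0 / lead_coeff (\<phi> 0)) (\<phi> 0)) i"
    proof (cases i)
      case 0 then show ?thesis using d0 lead_phi_nz[of 0] by simp
    next
      case (Suc j)
      then have "coeff p i = 0" "coeff (\<phi> 0) i = 0" using 0 d0 by (auto intro!: coeff_eq_0)
      then show ?thesis by simp
    qed
  qed
  then show ?case by (intro exI[of _ "\<lambda>_. coeff p 0 / lead_coeff (\<phi> 0)"]) simp
next
  case (Suc N)
  define a where "a = coeff p (Suc N) / lead_coeff (\<phi> (Suc N))"
  define p' where "p' = p - smult a (\<phi> (Suc N))"
  have dS: "degree (\<phi> (Suc N)) = Suc N" by (rule deg_phi)
  have "degree p' \<le> N"
  proof (rule degree_le, intro allI impI)
    fix i assume "N < i"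
    show "coeff p' i = 0"
    proof (cases "i = Suc N")
      case True then show ?thesis
        using dS lead_phi_nz[of "Suc N"] by (simp add: p'_def a_def)
    next
      case False
      then have "Suc N < i" using \<open>N < i\<close> by simp
      then have "coeff p i = 0" "coeff (\<phi> (Suc N)) i = 0" using Suc.prems dS by (auto intro!: coeff_eq_0)
      then show ?thesis by (simp add: p'_def)
    qed
  qed
  then obtain c where c: "p' = (\<Sum>k\<le>N. smult (c k) (\<phi> k))" using Suc.IH by blast
  define c' where "c' = c(Suc N := a)"
  have "(\<Sum>k\<le>Suc N. smult (c' k) (\<phi> k)) = (\<Sum>k\<le>N. smult (c k) (\<phi> k)) + smult a (\<phi> (Suc N))"
    by (simp add: c'_def)
  also have "\<dots> = p' + smult a (\<phi> (Suc N))" using c by simp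
  also have "\<dots> = p" by (simp add: p'_def)
  finally show ?case by metis
qed

lemma coef_of_sum:
  assumes "m \<le> N" shows "ip (\<Sum>k\<le>N. smult (c k) (\<phi> k)) (\<phi> m) = c m"
proof -
  have "ip (\<Sum>k\<le>N. smult (c k) (\<phi> k)) (\<phi> m) = (\<Sum>k\<le>N. c k * ip (\<phi> k) (\<phi> m))"
    by (simp only: ip_sum_left ip_smult_left)
  also have "\<dots> = (\<Sum>k\<le>N. if k = m then c k else 0)"
    by (intro sum.cong refl) (simp add: orth)
  also have "\<dots> = c m" using assms by (simp add: sum.delta)
  finally show ?thesis .
qed

lemma expand: "degree p \<le> N \<Longrightarrow> p = (\<Sum>k\<le>N. smult (ip p (\<phi> k)) (\<phi> k))"
proof -
  assume "degree p \<le> N"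
  then obtain c where c: "p = (\<Sum>k\<le>N. smult (c k) (\<phi> k))" using span_ex by blast
  have "\<And>k. k \<le> N \<Longrightarrow> ip p (\<phi> k) = c k" using c coef_of_sum by simp
  then have "(\<Sum>k\<le>N. smult (ip p (\<phi> k)) (\<phi> k)) = (\<Sum>k\<le>N. smult (c k) (\<phi> k))"
    by (intro sum.cong) auto
  then show ?thesis using c by simp
qed

lemma cnj_mult_self: "cnj c * c = complex_of_real ((cmod c)^2)"
proof -
  have "complex_of_real ((cmod c)^2) = (complex_of_real (cmod c))^2" by simp
  also have "\<dots> = c * cnj c" using complex_norm_square[of c] by simp
  finally show ?thesis by (simp only: mult.commute)
qed

lemma ip_self: "degree p \<le> N \<Longrightarrow> ip p p = of_real (\<Sum>k\<le>N. (cmod (ip p (\<phi> k)))^2)"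
proof -
  assume d: "degree p \<le> N"
  have "ip p p = ip p (\<Sum>k\<le>N. smult (ip p (\<phi> k)) (\<phi> k))"
    using expand[OF d] by simp
  also have "\<dots> = (\<Sum>k\<le>N. cnj (ip p (\<phi> k)) * ip p (\<phi> k))"
    by (simp add: ip_sum_right ip_smult_right)
  also have "\<dots> = (\<Sum>k\<le>N. of_real ((cmod (ip p (\<phi> k)))^2))"
    by (intro sum.cong refl) (rule cnj_mult_self)
  finally show ?thesis by simp
qed

lemma pos_def: "ip p p = 0 \<Longrightarrow> p = 0"
proof -
  assume z: "ip p p = 0"
  let ?N = "degree p"
  have "complex_of_real (\<Sum>k\<le>?N. (cmod (ip p (\<phi> k)))^2) = 0"
    using ip_self[of p ?N, OF order_refl] z by metis
  then have "(\<Sum>k\<le>?N. (cmod (ip p (\<phi> k)))^2) = 0"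
    by (simp only: of_real_eq_0_iff)
  then have "\<forall>k\<in>{..?N}. (cmod (ip p (\<phi> k)))^2 = 0"
    using sum_nonneg_eq_0_iff[of "{..?N}" "\<lambda>k. (cmod (ip p (\<phi> k)))^2"] by simp
  then have "\<And>k. k \<le> ?N \<Longrightarrow> ip p (\<phi> k) = 0" by simp
  then have "(\<Sum>k\<le>?N. smult (ip p (\<phi> k)) (\<phi> k)) = 0" by simp
  then show "p = 0" using expand[of p ?N] by simp
qed

lemma ip_self_real: "ip p p = of_real (Re (ip p p))" "Re (ip p p) \<ge> 0"
proof -
  have "ip p p = of_real (\<Sum>k\<le>degree p. (cmod (ip p (\<phi> k)))^2)" by (rule ip_self) simp
  moreover have "(\<Sum>k\<le>degree p. (cmod (ip p (\<phi> k)))^2) \<ge> 0" by (intro sum_nonneg) simp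
  ultimately show "ip p p = of_real (Re (ip p p))" "Re (ip p p) \<ge> 0" by simp_all
qed

lemma orth_low: "degree r < m \<Longrightarrow> ip (\<phi> m) r = 0"
proof -
  assume d: "degree r < m"
  then have d': "degree r \<le> m - 1" by simp
  have "ip (\<phi> m) r = ip (\<phi> m) (\<Sum>k\<le>m-1. smult (ip r (\<phi> k)) (\<phi> k))"
    using expand[OF d'] by simp
  also have "\<dots> = (\<Sum>k\<le>m-1. cnj (ip r (\<phi> k)) * ip (\<phi> m) (\<phi> k))"
    by (simp add: ip_sum_right ip_smult_right)
  also have "\<dots> = 0" using d by (intro sum.neutral) (auto simp: orth)
  finally show ?thesis .
qed

definition Kp :: "nat \<Rightarrow> complex \<Rightarrow> complex poly" where
  "Kp n w = (\<Sum>k<n. smult (cnj (poly (\<phi> k) w)) (\<phi> k))"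

lemma poly_Kp: "poly (Kp n w) z = CD_kernel \<phi> n z w"
  by (simp add: Kp_def CD_kernel_def poly_sum mult.commute)

lemma deg_Kp: "degree (Kp n w) \<le> n - 1"
proof (rule degree_le, intro allI impI)
  fix i assume i: "n - 1 < i"
  have "coeff (\<phi> k) i = 0" if "k < n" for k
    using that i deg_phi[of k] by (intro coeff_eq_0) simp
  then show "coeff (Kp n w) i = 0" by (simp add: Kp_def coeff_sum)
qed

lemma reproduce:
  assumes "degree p < n" shows "ip p (Kp n w) = poly p w"
proof -
  have n: "{..<n} = {..n-1}" using assms by auto
  have d: "degree p \<le> n - 1" using assms by simp
  have "ip p (Kp n w) = (\<Sum>k\<le>n-1. poly (\<phi> k) w * ip p (\<phi> k))"
    by (simp add: Kp_def ip_sum_right ip_smult_right n)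
  also have "\<dots> = poly (\<Sum>k\<le>n-1. smult (ip p (\<phi> k)) (\<phi> k)) w"
    by (simp add: poly_sum mult.commute)
  also have "\<dots> = poly p w" using expand[OF d] by simp
  finally show ?thesis .
qed

lemma K_diag_pos: "n \<ge> 1 \<Longrightarrow> Re (CD_kernel \<phi> n w w) > 0 \<and> Im (CD_kernel \<phi> n w w) = 0"
proof -
  assume n: "n \<ge> 1"
  define S where "S = (\<Sum>k<n. (cmod (poly (\<phi> k) w))^2)"
  have eq: "CD_kernel \<phi> n w w = of_real S"
    unfolding S_def CD_kernel_def of_real_sum by (intro sum.cong refl) (metis cnj_mult_self mult.commute)
  have "poly (\<phi> 0) w \<noteq> 0"
  proof -
    have "degree (\<phi> 0) = 0" by (rule deg_phi)
    then have "poly (\<phi> 0) w = lead_coeff (\<phi> 0)" by (simp add: poly_altdef)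
    then show ?thesis using lead_phi_nz by simp
  qed
  have "S \<ge> (cmod (poly (\<phi> 0) w))^2"
    unfolding S_def using n by (intro member_le_sum) auto
  moreover have "(cmod (poly (\<phi> 0) w))^2 > 0" using \<open>poly (\<phi> 0) w \<noteq> 0\<close> by simp
  ultimately have "S > 0" by linarith
  then show ?thesis using eq by simp
qed

end


lemma poly_sum_m: "degree (p :: complex poly) \<le> m \<Longrightarrow> poly p x = (\<Sum>i\<le>m. coeff p i * x ^ i)"
proof -
  assume "degree p \<le> m"
  then have "poly p x = poly (\<Sum>i\<le>m. monom (coeff p i) i) x"
    by (simp add: poly_as_sum_of_monoms')
  then show ?thesis by (simp add: poly_sum poly_monom)
qed

lemma poly_star_sum: "poly (poly_star m p) z = (\<Sum>k\<le>m. cnj (coeff p (m - k)) * z ^ k)"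
  by (simp add: poly_star_def poly_sum poly_monom)

lemma poly_star_eval:
  assumes d: "degree p \<le> m" and z: "z \<noteq> 0"
  shows "poly (poly_star m p) z = z ^ m * cnj (poly p (1 / cnj z))"
proof -
  have "cnj (poly p (1 / cnj z)) = (\<Sum>i\<le>m. cnj (coeff p i) * (1 / z) ^ i)"
    using poly_sum_m[OF d, of "1 / cnj z"] by simp
  then have "z ^ m * cnj (poly p (1 / cnj z)) = (\<Sum>i\<le>m. cnj (coeff p i) * z ^ (m - i))"
    using z by (simp add: sum_distrib_left power_diff power_one_over field_simps)
  also have "\<dots> = (\<Sum>i\<in>{0..m}. cnj (coeff p (m + 0 - i)) * z ^ (m - (m + 0 - i)))"
    by (subst sum.atLeastAtMost_rev) (simp add: atLeast0AtMost)
  also have "\<dots> = (\<Sum>k\<le>m. cnj (coeff p (m - k)) * z ^ k)"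
    by (intro sum.cong) (auto simp: atLeast0AtMost)
  finally show ?thesis by (simp add: poly_star_sum)
qed

lemma circle_cnj: "norm z = 1 \<Longrightarrow> cnj z * z = 1"
proof -
  assume "norm z = 1"
  then have "complex_of_real ((norm z)^2) = 1" by simp
  then show ?thesis using complex_norm_square[of z] by (simp add: mult.commute)
qed

lemma circle_inv: "norm z = 1 \<Longrightarrow> 1 / cnj z = z"
proof -
  assume a: "norm z = 1"
  then have "cnj z \<noteq> 0" by auto
  then show ?thesis using circle_cnj[OF a] by (simp add: field_simps)
qed

lemma poly_star_circle:
  "degree p \<le> m \<Longrightarrow> norm z = 1 \<Longrightarrow> poly (poly_star m p) z = z ^ m * cnj (poly p z)"
  using poly_star_eval[of p m z] circle_inv[of z] by fastforce

lemma poly_star_0: "poly (poly_star m p) 0 = cnj (coeff p m)"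
  by (simp add: poly_star_sum power_0_left sum.atMost_shift del: sum.atMost_Suc)

lemma degree_poly_star: "degree (poly_star m p) \<le> m"
  unfolding poly_star_def
  by (rule degree_le) (auto simp: coeff_sum coeff_monom)



lemma pCons0_mult: "[:0, 1:] * (p :: complex poly) = pCons 0 p"
  by simp

context opuc begin

lemma H_eval: "poly (paraorth \<phi> n b) z =
    z * poly (\<phi> (n-1)) z - cnj b * poly (poly_star (n-1) (\<phi> (n-1))) z"
  by (simp add: paraorth_def)

lemma H_deg:
  assumes n: "n \<ge> 1"
  shows "degree (paraorth \<phi> n b) = n" "coeff (paraorth \<phi> n b) n = lead_coeff (\<phi> (n-1))"
proof -
  have ds: "degree (poly_star (n-1) (\<phi> (n-1))) \<le> n - 1" by (rule degree_poly_star)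
  have cs: "coeff (poly_star (n-1) (\<phi> (n-1))) n = 0"
    using ds n by (intro coeff_eq_0) simp
  have c: "coeff (paraorth \<phi> n b) n = lead_coeff (\<phi> (n-1))"
    using cs n deg_phi[of "n-1"] by (cases n) (simp_all add: paraorth_def)
  then show "coeff (paraorth \<phi> n b) n = lead_coeff (\<phi> (n-1))" .
  have "degree (pCons 0 (\<phi> (n-1))) \<le> n"
    using n deg_phi[of "n-1"] by (cases "\<phi> (n-1) = 0") (auto simp: degree_pCons_eq)
  moreover have "degree (smult (cnj b) (poly_star (n-1) (\<phi> (n-1)))) \<le> n"
    using ds n by (meson degree_smult_le le_trans diff_le_self)
  ultimately have "degree (paraorth \<phi> n b) \<le> n"
    unfolding paraorth_def pCons0_mult by (rule degree_diff_le)
  moreover have "n \<le> degree (paraorth \<phi> n b)"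
    using c lead_phi_nz by (intro le_degree) simp
  ultimately show "degree (paraorth \<phi> n b) = n" by simp
qed

lemma H_nz: "n \<ge> 1 \<Longrightarrow> paraorth \<phi> n b \<noteq> 0"
  using H_deg(2)[of n b] lead_phi_nz[of "n-1"] by auto

lemma H_at_0: "b \<noteq> 0 \<Longrightarrow> poly (paraorth \<phi> n b) 0 \<noteq> 0"
proof -
  assume b: "b \<noteq> 0"
  have "poly (paraorth \<phi> n b) 0 = - cnj b * cnj (lead_coeff (\<phi> (n-1)))"
    by (simp add: H_eval poly_star_0 deg_phi)
  then show ?thesis using b lead_phi_nz[of "n-1"] by simp
qed

lemma H_sym:
  assumes n: "n \<ge> 1" and b: "norm b = 1" and z: "z \<noteq> 0"
  shows "z ^ n * cnj (poly (paraorth \<phi> n b) (1 / cnj z)) = - b * poly (paraorth \<phi> n b) z"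
proof -
  define m where "m = n - 1"
  have nm: "n = Suc m" using n m_def by simp
  define w where "w = 1 / cnj z"
  have w0: "w \<noteq> 0" using z by (simp add: w_def)
  have wz: "1 / cnj w = z" by (simp add: w_def)
  have cw: "cnj w = 1 / z" by (simp add: w_def)
  have dm: "degree (\<phi> m) \<le> m" using deg_phi by simp
  have sw: "poly (poly_star m (\<phi> m)) w = w ^ m * cnj (poly (\<phi> m) z)"
    using poly_star_eval[OF dm w0] wz by simp
  have sz: "poly (poly_star m (\<phi> m)) z = z ^ m * cnj (poly (\<phi> m) w)"
    using poly_star_eval[OF dm z] by (simp add: w_def)
  have bb: "b * cnj b = 1" using b complex_norm_square[of b] by simp
  have "poly (paraorth \<phi> n b) w = w * poly (\<phi> m) w - cnj b * (w ^ m * cnj (poly (\<phi> m) z))"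
    using H_eval[of n b w] sw by (simp add: m_def)
  then have "cnj (poly (paraorth \<phi> n b) w) = (1/z) * cnj (poly (\<phi> m) w) - b * ((1/z) ^ m * poly (\<phi> m) z)"
    by (simp add: cw)
  then have "z ^ n * cnj (poly (paraorth \<phi> n b) w) = z ^ m * cnj (poly (\<phi> m) w) - b * z * poly (\<phi> m) z"
    using z by (simp add: nm field_simps power_one_over)
  also have "\<dots> = - b * (z * poly (\<phi> m) z - cnj b * poly (poly_star m (\<phi> m)) z)"
    using bb sz by (simp add: algebra_simps)
  also have "\<dots> = - b * poly (paraorth \<phi> n b) z"
    using H_eval[of n b z] by (simp add: m_def)
  finally show ?thesis by (simp add: w_def)
qed

lemma ip_cong_AE:
  assumes "AE z in \<mu>. poly p z * cnj (poly q z) = f z" "continuous_on UNIV f"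
  shows "ip p q = (LINT z|\<mu>. f z)"
  unfolding ip_def by (rule integral_cong_AE[OF meas_cont[OF cont_pp] meas_cont[OF assms(2)] assms(1)])

lemma H_orth:
  assumes n: "n \<ge> 2" and r: "degree r < n - 1"
  shows "ip (paraorth \<phi> n b) ([:0,1:] * r) = 0"
proof -
  define m where "m = n - 1"
  have nm: "m \<ge> 1" using n m_def by simp
  have dm: "degree (\<phi> m) \<le> m" using deg_phi by simp
  define rs where "rs = poly_star (m - 1) r"
  have dr: "degree r \<le> m - 1" using r m_def by simp
  have A: "ip (pCons 0 (\<phi> m)) (pCons 0 r) = ip (\<phi> m) r"
  proof -
    have "ip (pCons 0 (\<phi> m)) (pCons 0 r) = (LINT z|\<mu>. poly (\<phi> m) z * cnj (poly r z))"
    proof (rule ip_cong_AE)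
      show "AE z in \<mu>. poly (pCons 0 (\<phi> m)) z * cnj (poly (pCons 0 r) z) = poly (\<phi> m) z * cnj (poly r z)"
        using AE_circ
      proof eventually_elim
        case (elim z)
        then have "cnj z * z = 1" by (rule circle_cnj)
        then show ?case by (simp add: algebra_simps)
      qed
      show "continuous_on UNIV (\<lambda>z. poly (\<phi> m) z * cnj (poly r z))"
        by (rule cont_pp)
    qed
    then show ?thesis by (simp add: ip_def)
  qed
  have B: "ip (poly_star m (\<phi> m)) (pCons 0 r) = cnj (ip (\<phi> m) rs)"
  proof -
    have "ip (poly_star m (\<phi> m)) (pCons 0 r) = (LINT z|\<mu>. cnj (poly (\<phi> m) z * cnj (poly rs z)))"
    proof (rule ip_cong_AE)
      show "AE z in \<mu>. poly (poly_star m (\<phi> m)) z * cnj (poly (pCons 0 r) z) = cnj (poly (\<phi> m) z * cnj (poly rs z))"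
        using AE_circ
      proof eventually_elim
        case (elim z)
        have cz: "cnj z * z = 1" using elim by (rule circle_cnj)
        have e1: "poly (poly_star m (\<phi> m)) z = z ^ m * cnj (poly (\<phi> m) z)"
          by (rule poly_star_circle[OF dm elim])
        have e2: "poly rs z = z ^ (m - 1) * cnj (poly r z)"
          unfolding rs_def by (rule poly_star_circle[OF dr elim])
        have zm: "z ^ m = z * z ^ (m - 1)" using nm by (cases m) auto
        show ?case unfolding e1 e2 zm using cz
          by (simp add: algebra_simps)
      qed
      show "continuous_on UNIV (\<lambda>z. cnj (poly (\<phi> m) z * cnj (poly rs z)))"
        by (intro continuous_on_cnj cont_pp)
    qed
    also have "\<dots> = cnj (ip (\<phi> m) rs)"
      unfolding ip_def by (rule Bochner_Integration.integral_cnj)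
    finally show ?thesis .
  qed
  have "ip (\<phi> m) r = 0" using r m_def by (intro orth_low) simp
  moreover have "ip (\<phi> m) rs = 0"
  proof (rule orth_low)
    show "degree rs < m" using degree_poly_star[of "m-1" r] nm by (simp add: rs_def)
  qed
  ultimately show ?thesis
    using A B by (simp add: paraorth_def ip_diff_left ip_smult_left m_def)
qed

end


lemma lin_dvd_obtain:
  fixes p :: "complex poly"
  assumes "poly p a = 0"
  obtains q where "p = [:-a, 1:] * q"
  using assms by (metis dvdE poly_eq_0_iff_dvd)

lemma deg_lin_mult: "q \<noteq> 0 \<Longrightarrow> degree ([:-a, 1:] * (q :: complex poly)) = Suc (degree q)"
  by (subst degree_mult_eq) auto

lemma aux_cnj: "(A::complex) * (cnj z - cnj w) * (z - w) * s * cnj s = A * (((z - w) * s) * cnj ((z - w) * s))"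
  by (simp add: algebra_simps)

context opuc begin

lemma ip_const_mult:
  assumes "AE z in \<mu>. poly p z * cnj (poly q z) = c * g z" "continuous_on UNIV g"
  shows "ip p q = c * (LINT z|\<mu>. g z)"
proof -
  have "ip p q = (LINT z|\<mu>. c * g z)"
    by (rule ip_cong_AE[OF assms(1)]) (intro continuous_intros assms(2))
  also have "\<dots> = c * (LINT z|\<mu>. g z)" by (rule integral_mult_right_zero)
  finally show ?thesis .
qed

lemma kernel_rel:
  assumes n: "n \<ge> 2" and z0: "norm z0 = 1" and h0: "poly (paraorth \<phi> n b) z0 = 0"
  shows "\<exists>c. c \<noteq> 0 \<and> (\<forall>z. poly (paraorth \<phi> n b) z = c * (z - z0) * CD_kernel \<phi> n z z0)"
proof -
  define H where "H = paraorth \<phi> n b"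
  obtain q where Hq: "H = [:-z0, 1:] * q" using h0 lin_dvd_obtain unfolding H_def by blast
  have Hnz: "H \<noteq> 0" unfolding H_def using n by (intro H_nz) simp
  then have qnz: "q \<noteq> 0" using Hq by auto
  have dq: "degree q = n - 1" using H_deg(1)[of n b] n deg_lin_mult[OF qnz, of z0] Hq unfolding H_def by simp
  define \<kappa> where "\<kappa> = CD_kernel \<phi> n z0 z0"
  have \<kappa>nz: "\<kappa> \<noteq> 0" using K_diag_pos[of n z0] n unfolding \<kappa>_def by auto
  define c0 where "c0 = poly q z0 / \<kappa>"
  define k where "k = Kp n z0"
  define q' where "q' = q - smult c0 k"
  have dk: "degree k \<le> n - 1" unfolding k_def by (rule deg_Kp)
  have dq': "degree q' < n"
    unfolding q'_def using dq dk n by (intro degree_diff_less) (auto intro: le_less_trans[OF degree_smult_le])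
  have pk: "poly k z0 = \<kappa>" by (simp add: k_def \<kappa>_def poly_Kp)
  have pq'0: "poly q' z0 = 0" using \<kappa>nz by (simp add: q'_def pk c0_def)
  obtain r where q'r: "q' = [:-z0, 1:] * r" using pq'0 lin_dvd_obtain by blast
  have dr: "degree r < n - 1"
  proof (cases "r = 0")
    case True then show ?thesis using n by simp
  next
    case False then show ?thesis using deg_lin_mult[OF False, of z0] q'r dq' by simp
  qed
  have ipk: "ip q' k = 0" unfolding k_def using reproduce[OF dq', of z0] pq'0 by simp
  have cz0: "cnj z0 * z0 = 1" using z0 by (rule circle_cnj)
  have "ip q' q = - z0 * (LINT z|\<mu>. cnj (poly H z * cnj (poly ([:0,1:] * r) z)))"
  proof (rule ip_const_mult)
    show "AE z in \<mu>. poly q' z * cnj (poly q z) = - z0 * cnj (poly H z * cnj (poly ([:0, 1:] * r) z))"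
      using AE_circ
    proof eventually_elim
      case (elim z)
      have cz: "cnj z * z = 1" using elim by (rule circle_cnj)
      have key: "- z0 * (z * (cnj z - cnj z0)) = z - z0"
      proof -
        have "- z0 * (z * (cnj z - cnj z0)) = - z0 * (cnj z * z) + z * (cnj z0 * z0)"
          by (simp add: algebra_simps)
        also have "\<dots> = z - z0" by (simp add: cz cz0)
        finally show ?thesis .
      qed
      have "- z0 * cnj (poly H z * cnj (poly ([:0, 1:] * r) z))
            = (- z0 * (z * (cnj z - cnj z0))) * poly r z * cnj (poly q z)"
        by (simp add: Hq algebra_simps)
      also have "\<dots> = (z - z0) * poly r z * cnj (poly q z)" unfolding key ..
      also have "\<dots> = poly q' z * cnj (poly q z)" by (simp add: q'r algebra_simps)
      finally show ?case by simp
    qed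
    show "continuous_on UNIV (\<lambda>z. cnj (poly H z * cnj (poly ([:0, 1:] * r) z)))"
      by (intro continuous_on_cnj cont_pp)
  qed
  also have "\<dots> = - z0 * cnj (ip H ([:0,1:] * r))"
    unfolding ip_def by (simp only: Bochner_Integration.integral_cnj)
  also have "ip H ([:0,1:] * r) = 0" unfolding H_def using n dr by (intro H_orth) auto
  finally have ipq: "ip q' q = 0" by simp
  have "ip q' q' = ip q' q - cnj c0 * ip q' k"
    by (simp add: q'_def ip_diff_right ip_smult_right)
  then have "ip q' q' = 0" using ipq ipk by simp
  then have "q' = 0" by (rule pos_def)
  then have qk: "q = smult c0 k" by (simp add: q'_def)
  have c0nz: "c0 \<noteq> 0" using qnz qk by auto
  have "\<forall>z. poly H z = c0 * (z - z0) * CD_kernel \<phi> n z z0"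
    by (simp add: Hq qk k_def poly_Kp algebra_simps)
  then show ?thesis using c0nz unfolding H_def by blast
qed

lemma on_circle:
  assumes n: "n \<ge> 2" and b: "norm b = 1" and h0: "poly (paraorth \<phi> n b) z0 = 0"
  shows "norm z0 = 1"
proof (rule ccontr)
  assume ne: "norm z0 \<noteq> 1"
  define H where "H = paraorth \<phi> n b"
  have bnz: "b \<noteq> 0" using b by auto
  have z0nz: "z0 \<noteq> 0" using H_at_0[OF bnz, of n] h0 by auto
  define z1 where "z1 = 1 / cnj z0"
  have "z0 ^ n * cnj (poly H z1) = - b * poly H z0"
    unfolding H_def z1_def using n b z0nz by (intro H_sym) auto
  then have h1: "poly H z1 = 0" using h0 z0nz unfolding H_def by simp
  have z10: "z1 \<noteq> z0"
  proof
    assume "z1 = z0"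
    then have "z0 * cnj z0 = 1" using z0nz by (simp add: z1_def field_simps)
    then have "complex_of_real ((norm z0)^2) = 1" using complex_norm_square[of z0] by simp
    then have "(norm z0)^2 = 1" by (metis of_real_eq_1_iff)
    then show False using ne norm_ge_zero[of z0] by (auto simp: power2_eq_1_iff)
  qed
  obtain q where Hq: "H = [:-z0, 1:] * q" using h0 lin_dvd_obtain unfolding H_def by blast
  have "poly q z1 = 0" using h1 z10 by (simp add: Hq)
  then obtain s where qs: "q = [:-z1, 1:] * s" using lin_dvd_obtain by blast
  have Hnz: "H \<noteq> 0" unfolding H_def using n by (intro H_nz) simp
  then have qnz: "q \<noteq> 0" and snz: "s \<noteq> 0" using Hq qs by auto
  have "degree H = n" unfolding H_def using n by (intro H_deg) simp
  then have ds: "degree s = n - 2"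
    using Hq qs deg_lin_mult[OF qnz, of z0] deg_lin_mult[OF snz, of z1] by simp
  define u where "u = [:-z0, 1:] * s"
  have cz0: "cnj z0 \<noteq> 0" using z0nz by simp
  have "ip H ([:0,1:] * s) = - (1 / cnj z0) * (LINT z|\<mu>. poly u z * cnj (poly u z))"
  proof (rule ip_const_mult)
    show "AE z in \<mu>. poly H z * cnj (poly ([:0, 1:] * s) z) = - (1 / cnj z0) * (poly u z * cnj (poly u z))"
      using AE_circ
    proof eventually_elim
      case (elim z)
      have cz: "cnj z * z = 1" using elim by (rule circle_cnj)
      have key: "(z - z1) * cnj z = - (1 / cnj z0) * (cnj z - cnj z0)"
      proof -
        have "(z - z1) * cnj z = cnj z * z - cnj z / cnj z0" by (simp add: z1_def algebra_simps)
        also have "\<dots> = - (1 / cnj z0) * (cnj z - cnj z0)" using cz cz0 by (simp add: field_simps)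
        finally show ?thesis .
      qed
      have "poly H z * cnj (poly ([:0, 1:] * s) z) = ((z - z1) * cnj z) * (z - z0) * poly s z * cnj (poly s z)"
        by (simp add: Hq qs algebra_simps)
      also have "\<dots> = (- (1 / cnj z0) * (cnj z - cnj z0)) * (z - z0) * poly s z * cnj (poly s z)"
        unfolding key ..
      also have "\<dots> = - (1 / cnj z0) * (poly u z * cnj (poly u z))"
      proof -
        have pu: "poly u z = (z - z0) * poly s z" by (simp add: u_def algebra_simps)
        show ?thesis unfolding pu by (rule aux_cnj)
      qed
      finally show ?case .
    qed
    show "continuous_on UNIV (\<lambda>z. poly u z * cnj (poly u z))" by (rule cont_pp)
  qed
  moreover have "ip H ([:0,1:] * s) = 0" unfolding H_def using n ds by (intro H_orth) auto
  ultimately have "ip u u = 0" using cz0 by (simp add: ip_def)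
  then have "u = 0" by (rule pos_def)
  then show False using snz unfolding u_def by (metis mult_eq_0_iff pCons_eq_0_iff one_neq_zero)
qed

end


definition PP :: "real set \<Rightarrow> real \<Rightarrow> int \<Rightarrow> real \<Rightarrow> bool" where
  "PP Z \<Theta> j t \<longleftrightarrow> t \<in> Z \<and>
        (if j \<ge> 0 then \<Theta> \<le> t \<and> int (card (Z \<inter> {\<Theta>..<t})) = j
         else t < \<Theta> \<and> int (card (Z \<inter> {t..<\<Theta>})) = - j)"

lemma zero_angle_PP: "zero_angle \<phi> \<beta> n \<Theta> j = (THE t. PP (zero_angles \<phi> \<beta> n) \<Theta> j t)"
  unfolding zero_angle_def PP_def ..

locale zset =
  fixes Z :: "real set" and \<alpha> \<beta> :: real
  assumes \<alpha>: "\<alpha> > 0"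
    and gap: "\<And>t s. t \<in> Z \<Longrightarrow> s \<in> Z \<Longrightarrow> t < s \<Longrightarrow> t + \<alpha> < s"
    and nxt: "\<And>t. t \<in> Z \<Longrightarrow> \<exists>s\<in>Z. t < s \<and> s < t + \<beta>"
    and below: "\<And>x. \<exists>t\<in>Z. t < x"
begin

lemma fin_cc: "finite (Z \<inter> {a..b})"
proof -
  define f where "f t = nat \<lfloor>(t - a) / \<alpha>\<rfloor>" for t
  have inj: "inj_on f (Z \<inter> {a..b})"
  proof (rule inj_onI)
    fix t s assume t: "t \<in> Z \<inter> {a..b}" and s: "s \<in> Z \<inter> {a..b}" and e: "f t = f s"
    show "t = s"
    proof (rule ccontr)
      assume "t \<noteq> s"
      then have "t < s \<or> s < t" by auto
      then have "t + \<alpha> < s \<or> s + \<alpha> < t" using gap t s by blast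
      then have d: "1 < \<bar>(s - a) / \<alpha> - (t - a) / \<alpha>\<bar>"
      proof
        assume "t + \<alpha> < s"
        then have "1 < (s - t) / \<alpha>" using \<alpha> by simp
        moreover have "(s - a) / \<alpha> - (t - a) / \<alpha> = (s - t) / \<alpha>" using \<alpha> by (simp add: field_simps)
        ultimately show ?thesis by arith
      next
        assume "s + \<alpha> < t"
        then have "1 < (t - s) / \<alpha>" using \<alpha> by simp
        moreover have "(s - a) / \<alpha> - (t - a) / \<alpha> = - ((t - s) / \<alpha>)" using \<alpha> by (simp add: field_simps)
        ultimately show ?thesis by arith
      qed
      have "\<lfloor>(t - a) / \<alpha>\<rfloor> \<noteq> \<lfloor>(s - a) / \<alpha>\<rfloor>"
      proof
        assume eq: "\<lfloor>(t - a) / \<alpha>\<rfloor> = \<lfloor>(s - a) / \<alpha>\<rfloor>"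
        have f: "of_int \<lfloor>(t - a) / \<alpha>\<rfloor> \<le> (t - a) / \<alpha>" "(t - a) / \<alpha> < of_int \<lfloor>(t - a) / \<alpha>\<rfloor> + 1"
             "of_int \<lfloor>(s - a) / \<alpha>\<rfloor> \<le> (s - a) / \<alpha>" "(s - a) / \<alpha> < of_int \<lfloor>(s - a) / \<alpha>\<rfloor> + 1"
          by (simp_all add: of_int_floor_le)
        have "real_of_int \<lfloor>(t - a) / \<alpha>\<rfloor> = real_of_int \<lfloor>(s - a) / \<alpha>\<rfloor>" using eq by simp
        then show False using d f by arith
      qed
      moreover have "\<lfloor>(t - a) / \<alpha>\<rfloor> \<ge> 0" "\<lfloor>(s - a) / \<alpha>\<rfloor> \<ge> 0" using t s \<alpha> by auto
      ultimately show False using e unfolding f_def by (simp add: nat_eq_iff2)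
    qed
  qed
  have "f ` (Z \<inter> {a..b}) \<subseteq> {0..nat \<lfloor>(b - a) / \<alpha>\<rfloor>}"
  proof
    fix y assume "y \<in> f ` (Z \<inter> {a..b})"
    then obtain t where t: "t \<in> Z \<inter> {a..b}" "y = f t" by blast
    have "(t - a) / \<alpha> \<le> (b - a) / \<alpha>" using t \<alpha> by (auto simp: divide_right_mono)
    then have "\<lfloor>(t - a) / \<alpha>\<rfloor> \<le> \<lfloor>(b - a) / \<alpha>\<rfloor>" by (rule floor_mono)
    then show "y \<in> {0..nat \<lfloor>(b - a) / \<alpha>\<rfloor>}" using t unfolding f_def by auto
  qed
  then have "finite (f ` (Z \<inter> {a..b}))" by (rule finite_subset) simp
  then show ?thesis using inj by (rule finite_imageD)
qed

lemma fin_co: "finite (Z \<inter> {a..<b})"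
  by (rule finite_subset[OF _ fin_cc[of a b]]) auto

lemma next_ex: "t \<in> Z \<Longrightarrow> \<exists>t'\<in>Z. t < t' \<and> t' < t + \<beta> \<and> (\<forall>u\<in>Z. \<not> (t < u \<and> u < t'))"
proof -
  assume t: "t \<in> Z"
  define S where "S = Z \<inter> {t<..<t + \<beta>}"
  have fS: "finite S" unfolding S_def by (rule finite_subset[OF _ fin_cc[of t "t + \<beta>"]]) auto
  have neS: "S \<noteq> {}" using nxt[OF t] unfolding S_def by auto
  define t' where "t' = Min S"
  have t'S: "t' \<in> S" unfolding t'_def using fS neS by (rule Min_in)
  have "\<forall>u\<in>Z. \<not> (t < u \<and> u < t')"
  proof (intro ballI notI)
    fix u assume u: "u \<in> Z" "t < u \<and> u < t'"
    then have "u \<in> S" using t'S unfolding S_def by auto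
    then have "t' \<le> u" unfolding t'_def using fS by simp
    then show False using u by simp
  qed
  then show ?thesis using t'S unfolding S_def by auto
qed

lemma prev_ex: "\<exists>t'\<in>Z. t' < x \<and> (\<forall>u\<in>Z. \<not> (t' < u \<and> u < x))"
proof -
  obtain y where y: "y \<in> Z" "y < x" using below by blast
  define S where "S = Z \<inter> {y..<x}"
  have fS: "finite S" unfolding S_def by (rule fin_co)
  have neS: "S \<noteq> {}" using y unfolding S_def by auto
  define t' where "t' = Max S"
  have t'S: "t' \<in> S" unfolding t'_def using fS neS by (rule Max_in)
  have "\<forall>u\<in>Z. \<not> (t' < u \<and> u < x)"
  proof (intro ballI notI)
    fix u assume u: "u \<in> Z" "t' < u \<and> u < x"
    then have "u \<in> S" using t'S unfolding S_def by auto
    then have "u \<le> t'" unfolding t'_def using fS by simp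
    then show False using u by simp
  qed
  then show ?thesis using t'S unfolding S_def by auto
qed

lemma uniq: "PP Z \<Theta> j t \<Longrightarrow> PP Z \<Theta> j s \<Longrightarrow> t = s"
proof -
  have *: "t = s" if lt: "t < s" and Pt: "PP Z \<Theta> j t" and Ps: "PP Z \<Theta> j s" for t s
  proof (cases "j \<ge> 0")
    case True
    have A: "Z \<inter> {\<Theta>..<t} \<subseteq> Z \<inter> {\<Theta>..<s}" using lt by auto
    have B: "t \<in> Z \<inter> {\<Theta>..<s}" "t \<notin> Z \<inter> {\<Theta>..<t}" using lt Pt True unfolding PP_def by auto
    have "Z \<inter> {\<Theta>..<t} \<subset> Z \<inter> {\<Theta>..<s}" using A B by blast
    then have "card (Z \<inter> {\<Theta>..<t}) < card (Z \<inter> {\<Theta>..<s})" by (rule psubset_card_mono[OF fin_co])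
    then show ?thesis using True Pt Ps unfolding PP_def by simp
  next
    case False
    have A: "Z \<inter> {s..<\<Theta>} \<subseteq> Z \<inter> {t..<\<Theta>}" using lt by auto
    have B: "t \<in> Z \<inter> {t..<\<Theta>}" "t \<notin> Z \<inter> {s..<\<Theta>}" using lt Pt False unfolding PP_def by auto
    have "Z \<inter> {s..<\<Theta>} \<subset> Z \<inter> {t..<\<Theta>}" using A B by blast
    then have "card (Z \<inter> {s..<\<Theta>}) < card (Z \<inter> {t..<\<Theta>})" by (rule psubset_card_mono[OF fin_co])
    then show ?thesis using False Pt Ps unfolding PP_def by simp
  qed
  assume "PP Z \<Theta> j t" "PP Z \<Theta> j s"
  then show "t = s" using *[of t s] *[of s t] by (cases "t < s"; cases "s < t") auto
qed

lemma stepF: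
  assumes P: "PP Z \<Theta> j t" and t': "t' \<in> Z" "t < t'" and no: "\<forall>u\<in>Z. \<not> (t < u \<and> u < t')"
  shows "PP Z \<Theta> (j + 1) t'"
proof -
  have tZ: "t \<in> Z" using P unfolding PP_def by simp
  consider "j \<ge> 0" | "j = -1" | "j \<le> -2" by linarith
  then show ?thesis
  proof cases
    case 1
    then have a: "\<Theta> \<le> t" "int (card (Z \<inter> {\<Theta>..<t})) = j" using P unfolding PP_def by auto
    have eq: "Z \<inter> {\<Theta>..<t'} = insert t (Z \<inter> {\<Theta>..<t})"
      using a(1) t' no tZ by force
    have "card (Z \<inter> {\<Theta>..<t'}) = Suc (card (Z \<inter> {\<Theta>..<t}))"
      unfolding eq by (rule card_insert_disjoint[OF fin_co]) simp
    then show ?thesis using a 1 t' unfolding PP_def by simp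
  next
    case 2
    then have a: "t < \<Theta>" "card (Z \<inter> {t..<\<Theta>}) = 1" using P unfolding PP_def by auto
    then obtain x where x: "Z \<inter> {t..<\<Theta>} = {x}" by (meson card_1_singletonE)
    then have "x = t" using tZ a(1) by auto
    then have "\<Theta> \<le> t'" using x t' by (metis Int_iff atLeastLessThan_iff less_eq_real_def not_le singletonD)
    moreover have "Z \<inter> {\<Theta>..<t'} = {}" using no a(1) by force
    ultimately show ?thesis using 2 t' unfolding PP_def by simp
  next
    case 3
    then have a: "t < \<Theta>" "int (card (Z \<inter> {t..<\<Theta>})) = - j" using P unfolding PP_def by auto
    have "t' < \<Theta>"
    proof (rule ccontr)
      assume "\<not> t' < \<Theta>"
      then have "Z \<inter> {t..<\<Theta>} \<subseteq> {t}" using no by force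
      then have "card (Z \<inter> {t..<\<Theta>}) \<le> 1" using card_mono[of "{t}"] by fastforce
      then show False using a 3 by linarith
    qed
    have eq: "Z \<inter> {t..<\<Theta>} = insert t (Z \<inter> {t'..<\<Theta>})"
      using \<open>t' < \<Theta>\<close> a(1) t' no tZ by force
    have "card (Z \<inter> {t..<\<Theta>}) = Suc (card (Z \<inter> {t'..<\<Theta>}))"
      unfolding eq by (rule card_insert_disjoint[OF fin_co]) (use t' in simp)
    then show ?thesis using a 3 t' \<open>t' < \<Theta>\<close> unfolding PP_def by simp
  qed
qed

lemma stepB:
  assumes P: "PP Z \<Theta> j t" and t': "t' \<in> Z" "t' < t" and no: "\<forall>u\<in>Z. \<not> (t' < u \<and> u < t)"
  shows "PP Z \<Theta> (j - 1) t'"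
proof -
  have tZ: "t \<in> Z" using P unfolding PP_def by simp
  consider "j \<ge> 1" | "j = 0" | "j < 0" by linarith
  then show ?thesis
  proof cases
    case 1
    then have a: "\<Theta> \<le> t" "int (card (Z \<inter> {\<Theta>..<t})) = j" using P unfolding PP_def by auto
    have "\<Theta> \<le> t'"
    proof (rule ccontr)
      assume "\<not> \<Theta> \<le> t'"
      then have "Z \<inter> {\<Theta>..<t} = {}" using no by force
      then show False using a 1 by simp
    qed
    have eq: "Z \<inter> {\<Theta>..<t} = insert t' (Z \<inter> {\<Theta>..<t'})"
      using \<open>\<Theta> \<le> t'\<close> t' no by force
    have "card (Z \<inter> {\<Theta>..<t}) = Suc (card (Z \<inter> {\<Theta>..<t'}))"
      unfolding eq by (rule card_insert_disjoint[OF fin_co]) simp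
    then show ?thesis using a 1 t' \<open>\<Theta> \<le> t'\<close> unfolding PP_def by simp
  next
    case 2
    then have a: "\<Theta> \<le> t" "card (Z \<inter> {\<Theta>..<t}) = 0" using P unfolding PP_def by auto
    then have e: "Z \<inter> {\<Theta>..<t} = {}" using fin_co by simp
    then have "t' < \<Theta>" using t' by force
    have "Z \<inter> {t'..<\<Theta>} = {t'}" using t' no a(1) \<open>t' < \<Theta>\<close> by force
    then show ?thesis using 2 t' \<open>t' < \<Theta>\<close> unfolding PP_def by simp
  next
    case 3
    then have a: "t < \<Theta>" "int (card (Z \<inter> {t..<\<Theta>})) = - j" using P unfolding PP_def by auto
    have eq: "Z \<inter> {t'..<\<Theta>} = insert t' (Z \<inter> {t..<\<Theta>})"
      using a(1) t' no tZ by force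
    have "card (Z \<inter> {t'..<\<Theta>}) = Suc (card (Z \<inter> {t..<\<Theta>}))"
      unfolding eq by (rule card_insert_disjoint[OF fin_co]) (use t' in simp)
    then show ?thesis using a 3 t' unfolding PP_def by simp
  qed
qed

lemma ex_PP: "\<exists>t. PP Z \<Theta> j t"
proof -
  have base0: "\<exists>t. PP Z \<Theta> (-1) t"
  proof -
    obtain t where t: "t \<in> Z" "t < \<Theta>" "\<forall>u\<in>Z. \<not> (t < u \<and> u < \<Theta>)" using prev_ex by blast
    then have "Z \<inter> {t..<\<Theta>} = {t}" by force
    then have "PP Z \<Theta> (-1) t" using t unfolding PP_def by simp
    then show ?thesis by blast
  qed
  show ?thesis
  proof (induction j rule: int_induct[where k = "-1"])
    case base then show ?case by (rule base0)
  next
    case (step1 i)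
    then obtain t where t: "PP Z \<Theta> i t" by blast
    then have "t \<in> Z" unfolding PP_def by simp
    then obtain t' where "t' \<in> Z" "t < t'" "\<forall>u\<in>Z. \<not> (t < u \<and> u < t')" using next_ex by blast
    then show ?case using stepF[OF t] by blast
  next
    case (step2 i)
    then obtain t where t: "PP Z \<Theta> i t" by blast
    obtain t' where "t' \<in> Z" "t' < t" "\<forall>u\<in>Z. \<not> (t' < u \<and> u < t)" using prev_ex by blast
    then show ?case using stepB[OF t] by blast
  qed
qed

lemma the_PP: "PP Z \<Theta> j (THE t. PP Z \<Theta> j t)"
proof (rule theI')
  show "\<exists>!t. PP Z \<Theta> j t" using ex_PP uniq by blast
qed

lemma spacing:
  "(THE t. PP Z \<Theta> (j + 1) t) - (THE t. PP Z \<Theta> j t) > \<alpha> \<and>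
   (THE t. PP Z \<Theta> (j + 1) t) - (THE t. PP Z \<Theta> j t) < \<beta>"
proof -
  define t where "t = (THE t. PP Z \<Theta> j t)"
  have Pt: "PP Z \<Theta> j t" unfolding t_def by (rule the_PP)
  then have tZ: "t \<in> Z" unfolding PP_def by simp
  obtain t' where t': "t' \<in> Z" "t < t'" "t' < t + \<beta>" "\<forall>u\<in>Z. \<not> (t < u \<and> u < t')"
    using next_ex[OF tZ] by blast
  have P': "PP Z \<Theta> (j+1) t'" using stepF[OF Pt t'(1,2) t'(4)] .
  have "(THE t. PP Z \<Theta> (j + 1) t) = t'" using uniq[OF the_PP P'] .
  moreover have "t + \<alpha> < t'" using gap[OF tZ t'(1,2)] .
  ultimately show ?thesis using t' unfolding t_def[symmetric] by simp
qed

end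


lemma sin_lower: fixes x :: real assumes "0 \<le> x" "x \<le> 2" shows "x / 3 \<le> sin x"
proof -
  have "\<bar>sin x - (\<Sum>m<3. sin_coeff m * x ^ m)\<bar> \<le> inverse (fact 3) * \<bar>x\<bar> ^ 3"
    by (rule Maclaurin_sin_bound)
  moreover have "(\<Sum>m<3. sin_coeff m * x ^ m) = x"
    by (simp add: numeral_3_eq_3 sin_coeff_def)
  ultimately have "sin x \<ge> x - x ^ 3 / 6" using assms by (simp add: fact_numeral abs_if split: if_splits)
  moreover have "x ^ 3 \<le> 4 * x"
  proof -
    have "x ^ 3 = x * x\<^sup>2" by (simp add: power3_eq_cube power2_eq_square)
    also have "\<dots> \<le> x * 4" using assms by (intro mult_left_mono) (auto simp: power2_eq_square intro: mult_mono[of x 2 x 2, simplified])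
    finally show ?thesis by simp
  qed
  ultimately show ?thesis by simp
qed

lemma sk_real: assumes "a \<noteq> 0"
  shows "sine_kernel (of_real a) = cis (pi * a) * of_real (sin (pi * a) / (pi * a))"
proof -
  have "exp (\<i> * of_real pi * of_real a) = cis (pi * a)" by (simp add: cis_conv_exp mult.assoc)
  moreover have "sin (of_real pi * of_real a) = (of_real (sin (pi * a)) :: complex)"
    by (simp flip: of_real_mult add: sin_of_real)
  ultimately show ?thesis using assms by (simp add: sine_kernel_def)
qed

lemma sk_lower:
  assumes e: "0 < \<epsilon>" "\<epsilon> \<le> 1" and a: "0 < a" "a \<le> 1 - \<epsilon>"
  shows "\<epsilon> / 3 \<le> norm (sine_kernel (of_real a))"
proof -
  have na: "norm (sine_kernel (of_real a)) = \<bar>sin (pi * a)\<bar> / (pi * a)"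
  proof -
    have "norm (sine_kernel (of_real a)) = norm (cis (pi * a)) * norm (complex_of_real (sin (pi * a) / (pi * a)))"
      using a by (simp only: sk_real norm_mult)
    also have "\<dots> = \<bar>sin (pi * a) / (pi * a)\<bar>" by (simp only: norm_cis norm_of_real mult_1)
    also have "\<dots> = \<bar>sin (pi * a)\<bar> / (pi * a)" using a by (simp add: abs_divide)
    finally show ?thesis .
  qed
  have pa: "pi * a > 0" using a by simp
  show ?thesis
  proof (cases "pi * a \<le> 2")
    case True
    have "pi * a / 3 \<le> sin (pi * a)" using True pa by (intro sin_lower) auto
    then have "1/3 \<le> \<bar>sin (pi * a)\<bar> / (pi * a)" using pa by (simp add: field_simps)
    then show ?thesis using na e by simp
  next
    case False
    have s: "sin (pi * a) = sin (pi - pi * a)" by simp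
    have "pi - pi * a \<ge> pi * \<epsilon>" using a mult_left_mono[of "\<epsilon> + a" 1 pi] by (simp add: algebra_simps)
    moreover have "pi - pi * a \<le> 2" using False pi_less_4 by linarith
    ultimately have "(pi - pi * a) / 3 \<le> sin (pi - pi * a)" using e a by (intro sin_lower) (auto intro: order_trans[OF _ \<open>pi * \<epsilon> \<le> _\<close>])
    note sl = this
    have "pi * \<epsilon> / 3 \<le> (pi - pi * a) / 3" using \<open>pi - pi * a \<ge> pi * \<epsilon>\<close> by (intro divide_right_mono) auto
    also have "\<dots> \<le> sin (pi - pi * a)" by (rule sl)
    also have "\<dots> = sin (pi * a)" using s by simp
    finally have "pi * \<epsilon> / 3 \<le> sin (pi * a)" .
    moreover have "pi * a \<le> pi" using a e by simp
    ultimately have "\<epsilon> / 3 \<le> \<bar>sin (pi * a)\<bar> / (pi * a)"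
    proof -
      assume h1: "pi * \<epsilon> / 3 \<le> sin (pi * a)" and h2: "pi * a \<le> pi"
      have "\<epsilon> / 3 = (pi * \<epsilon> / 3) / pi" by simp
      also have "\<dots> \<le> sin (pi * a) / pi" using h1 by (intro divide_right_mono) auto
      also have "\<dots> \<le> sin (pi * a) / (pi * a)" using h1 h2 pa e
        by (intro divide_left_mono) (auto intro: order_trans[OF _ h1])
      also have "\<dots> \<le> \<bar>sin (pi * a)\<bar> / (pi * a)" using pa by (intro divide_right_mono) auto
      finally show ?thesis .
    qed
    then show ?thesis using na by simp
  qed
qed

lemma pi2_gt_0: "0 < 2 * pi" by simp

lemma cis_ne: assumes "0 < y - x" "y - x < 2 * pi" shows "cis y \<noteq> cis x"
proof
  assume "cis y = cis x"
  then have "cis (y - x) = 1" by (simp flip: cis_divide)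
  then have "Re (cis (y - x)) = 1" by simp
  then have "cos (y - x) = 1" by simp
  then obtain n :: int where n: "y - x = real_of_int n * 2 * pi" using cos_one_2pi_int by blast
  have h: "0 < real_of_int n * (2*pi)" "real_of_int n * (2*pi) < 1 * (2*pi)"
    using n assms by (simp_all add: mult.assoc)
  have "0 < real_of_int n" using h(1) by (simp add: zero_less_mult_iff)
  moreover have "real_of_int n < 1" using h(2) by (simp only: mult_less_cancel_right_pos[OF pi2_gt_0]) 
  ultimately have "0 < n" "n < 1" by simp_all
  then show False by linarith
qed

lemma cis_period: "cis (t - 2 * pi * of_int k) = cis t"
proof -
  have "cis (t - 2 * pi * of_int k) = cis t / cis (2 * pi * of_int k)" by (rule cis_divide[symmetric])
  also have "cis (2 * pi * of_int k) = 1" by (rule cis_multiple_2pi) auto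
  finally show ?thesis by simp
qed

lemma cis_diff_sin: "cis u - cis (- u) = 2 * \<i> * of_real (sin u)"
  by (simp add: complex_eq_iff)

lemma re_neg:
  fixes g1 g2 :: complex and L1 L2 \<delta> :: real
  assumes L: "L1 > 0" "L2 < 0" and d: "\<delta> = min L1 (- L2) / 2"
    and g1: "norm (g1 - of_real L1) < \<delta>" and g2: "norm (g2 - of_real L2) < \<delta>"
  shows "Re (g1 * cnj g2) < 0"
proof -
  have r1: "\<bar>Re g1 - L1\<bar> < \<delta>" "\<bar>Im g1\<bar> < \<delta>"
    using g1 abs_Re_le_cmod[of "g1 - of_real L1"] abs_Im_le_cmod[of "g1 - of_real L1"] by auto
  have r2: "\<bar>Re g2 - L2\<bar> < \<delta>" "\<bar>Im g2\<bar> < \<delta>"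
    using g2 abs_Re_le_cmod[of "g2 - of_real L2"] abs_Im_le_cmod[of "g2 - of_real L2"] by auto
  have dpos: "\<delta> > 0" using L d by simp
  define p where "p = L1 - \<delta>"
  define q where "q = - L2 - \<delta>"
  have pq: "\<delta> \<le> p" "\<delta> \<le> q" using L d by (auto simp: p_def q_def)
  have A: "Re g1 > p" "- Re g2 > q" using r1 r2 by (auto simp: p_def q_def)
  have "p * q < Re g1 * (- Re g2)"
    using A pq dpos by (intro mult_strict_mono) auto
  moreover have "\<delta> * \<delta> \<le> p * q" using pq dpos by (intro mult_mono) auto
  moreover have "\<bar>Im g1 * Im g2\<bar> \<le> \<delta> * \<delta>"
    unfolding abs_mult using r1 r2 by (intro mult_mono) auto
  ultimately have "Re g1 * Re g2 + Im g1 * Im g2 < 0" by linarith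
  then show ?thesis by simp
qed



definition Fk :: "(nat \<Rightarrow> complex poly) \<Rightarrow> nat \<Rightarrow> real \<Rightarrow> real \<Rightarrow> complex" where
  "Fk \<phi> n t a = CD_kernel \<phi> n (cis (t + 2 * pi * a / real n)) (cis t) / CD_kernel \<phi> n (cis t) (cis t)"

definition ph :: "nat \<Rightarrow> real \<Rightarrow> complex" where
  "ph n a = cis (- ((real n - 1) * (2 * pi * a / real n) / 2))"

lemma cis_lin: "cis P * (cis Q - cis R) = cis (P + Q) - cis (P + R)"
  by (simp add: right_diff_distrib cis_mult)

lemma cis_lin2: "cis A * (cis B - cis C) * cis D = cis (A + B + D) - cis (A + C + D)"
proof -
  have "cis A * (cis B - cis C) * cis D = cis A * cis B * cis D - cis A * cis C * cis D"
    by (simp add: algebra_simps)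
  also have "cis A * cis B * cis D = cis (A + B + D)" by (simp add: cis_mult)
  also have "cis A * cis C * cis D = cis (A + C + D)" by (simp add: cis_mult)
  finally show ?thesis .
qed

lemma core_ident:
  "cis (- (real n * (t + s) / 2)) * (cis (t + s) - cis t) =
   cis (t - real n * t / 2) * (2 * \<i> * of_real (sin (s / 2))) * cis (- ((real n - 1) * s / 2))"
proof -
  have "cis (- (real n * (t + s) / 2)) * (cis (t + s) - cis t) =
        cis (- (real n * (t + s) / 2) + (t + s)) - cis (- (real n * (t + s) / 2) + t)"
    by (rule cis_lin)
  also have "\<dots> = cis ((t - real n * t / 2) + (s / 2) + (- ((real n - 1) * s / 2))) -
                   cis ((t - real n * t / 2) + (- (s / 2)) + (- ((real n - 1) * s / 2)))"
    by (simp add: algebra_simps add_divide_distrib diff_divide_distrib)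
  also have "\<dots> = cis (t - real n * t / 2) * (cis (s / 2) - cis (- (s / 2))) * cis (- ((real n - 1) * s / 2))"
    by (rule cis_lin2[symmetric])
  also have "\<dots> = cis (t - real n * t / 2) * (2 * \<i> * of_real (sin (s / 2))) * cis (- ((real n - 1) * s / 2))"
    by (simp only: cis_diff_sin)
  finally show ?thesis .
qed

context opuc begin

lemma v_real:
  assumes n: "n \<ge> 1" and b: "norm b = 1" and g: "\<gamma>^2 = - cnj b" "norm \<gamma> = 1"
  shows "cnj (cnj \<gamma> * cis (- (real n * x / 2)) * poly (paraorth \<phi> n b) (cis x)) =
         cnj \<gamma> * cis (- (real n * x / 2)) * poly (paraorth \<phi> n b) (cis x)"
proof -
  define h where "h = poly (paraorth \<phi> n b) (cis x)"
  have "(cis x) ^ n * cnj (poly (paraorth \<phi> n b) (1 / cnj (cis x))) = - b * h"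
    unfolding h_def using n b by (intro H_sym) auto
  moreover have "1 / cnj (cis x) = cis x" by (rule circle_inv) simp
  moreover have "(cis x) ^ n = cis (real n * x)" by (rule Complex.DeMoivre)
  ultimately have E1: "cis (real n * x) * cnj h = - b * h" unfolding h_def by metis
  have gg: "cnj \<gamma> = - \<gamma> * b"
  proof -
    have c1: "cnj \<gamma> * \<gamma> = 1" using g(2) by (rule circle_cnj)
    have c2: "cnj b * b = 1" using b by (rule circle_cnj)
    have "\<gamma> * \<gamma> * b = - 1" using g(1) c2 by (simp add: power2_eq_square)
    then have "cnj \<gamma> * (\<gamma> * \<gamma> * b) = - cnj \<gamma>" by simp
    then have "(cnj \<gamma> * \<gamma>) * (\<gamma> * b) = - cnj \<gamma>" by (simp add: mult_ac)
    then show ?thesis using c1 by simp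
  qed
  have cc: "cis (real n * x / 2) = cis (- (real n * x / 2)) * cis (real n * x)"
    by (simp add: cis_mult mult.commute)
  have "cnj (cnj \<gamma> * cis (- (real n * x / 2)) * h) = \<gamma> * cis (real n * x / 2) * cnj h"
    by (simp add: cis_cnj)
  also have "\<dots> = \<gamma> * cis (- (real n * x / 2)) * (cis (real n * x) * cnj h)"
    unfolding cc by (simp add: mult_ac)
  also have "\<dots> = (- \<gamma> * b) * cis (- (real n * x / 2)) * h"
    unfolding E1 by (simp add: mult_ac)
  also have "\<dots> = cnj \<gamma> * cis (- (real n * x / 2)) * h" by (simp add: gg)
  finally show ?thesis unfolding h_def .
qed

lemma v_formula:
  assumes K: "\<forall>z. poly (paraorth \<phi> n b) z = c * (z - cis t) * CD_kernel \<phi> n z (cis t)"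
  shows "cnj \<gamma> * cis (- (real n * (t + s) / 2)) * poly (paraorth \<phi> n b) (cis (t + s)) =
         (cnj \<gamma> * c * cis (t - real n * t / 2)) * (2 * \<i> * of_real (sin (s / 2))) *
         (cis (- ((real n - 1) * s / 2)) * CD_kernel \<phi> n (cis (t + s)) (cis t))"
proof -
  have "cnj \<gamma> * cis (- (real n * (t + s) / 2)) * poly (paraorth \<phi> n b) (cis (t + s)) =
        cnj \<gamma> * c * (cis (- (real n * (t + s) / 2)) * (cis (t + s) - cis t)) * CD_kernel \<phi> n (cis (t + s)) (cis t)"
    using K by (simp add: mult_ac)
  also have "\<dots> = cnj \<gamma> * c * (cis (t - real n * t / 2) * (2 * \<i> * of_real (sin (s / 2))) * cis (- ((real n - 1) * s / 2))) * CD_kernel \<phi> n (cis (t + s)) (cis t)"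
    by (simp only: core_ident)
  finally show ?thesis by (simp add: mult_ac)
qed

end


context opuc begin

lemma gapA:
  assumes n: "n \<ge> 2" and b: "norm b = 1" and e: "0 < \<epsilon>" "\<epsilon> \<le> 1"
    and close: "\<forall>t. \<forall>a\<in>{0..2}. norm (Fk \<phi> n t a - sine_kernel (of_real a)) < \<epsilon> / 3"
    and zt: "poly (paraorth \<phi> n b) (cis t) = 0" and zs: "poly (paraorth \<phi> n b) (cis s) = 0"
    and ts: "t < s"
  shows "t + 2 * pi * (1 - \<epsilon>) / real n < s"
proof (rule ccontr)
  assume "\<not> ?thesis"
  then have le: "s - t \<le> 2 * pi * (1 - \<epsilon>) / real n" by simp
  have np: "real n > 0" using n by simp
  define a where "a = real n * (s - t) / (2 * pi)"
  have a0: "0 < a" using ts np by (simp add: a_def)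
  have "real n * (s - t) \<le> 2 * pi * (1 - \<epsilon>)" using le np by (simp add: field_simps)
  then have a1: "a \<le> 1 - \<epsilon>" by (simp add: a_def field_simps)
  have sa: "t + 2 * pi * a / real n = s" using np by (simp add: a_def field_simps)
  obtain c where c: "c \<noteq> 0" "\<forall>z. poly (paraorth \<phi> n b) z = c * (z - cis t) * CD_kernel \<phi> n z (cis t)"
    using kernel_rel[OF n _ zt] by auto
  have "2 * pi * (1 - \<epsilon>) / real n < 2 * pi"
  proof -
    have "(1 - \<epsilon>) / real n < 1" using e n by (simp add: field_simps)
    then have "(2 * pi) * ((1 - \<epsilon>) / real n) < (2 * pi) * 1" by (intro mult_strict_left_mono) auto
    then show ?thesis by simp
  qed
  then have "cis s \<noteq> cis t" using ts le by (intro cis_ne) auto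
  then have K0: "CD_kernel \<phi> n (cis s) (cis t) = 0" using c zs by simp
  have "Fk \<phi> n t a = 0" unfolding Fk_def sa K0 by simp
  moreover have "a \<in> {0..2}" using a0 a1 e by simp
  moreover have "norm (Fk \<phi> n t a - sine_kernel (of_real a)) < \<epsilon> / 3" using close \<open>a \<in> {0..2}\<close> by blast
  ultimately have "norm (sine_kernel (of_real a)) < \<epsilon> / 3" by simp
  moreover have "\<epsilon> / 3 \<le> norm (sine_kernel (of_real a))" using e a0 a1 by (rule sk_lower)
  ultimately show False by simp
qed

lemma gapB:
  assumes n: "n \<ge> 2" and b: "norm b = 1" and e: "0 < \<epsilon>" "\<epsilon> < 1"
    and L: "L1 = sin (pi * (1/2)) / (pi * (1/2))" "L2 = sin (pi * (1 + \<epsilon>/2)) / (pi * (1 + \<epsilon>/2))"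
      "\<delta> = min L1 (-L2) / 2"
    and close1: "\<forall>t. norm (ph n (1/2) * Fk \<phi> n t (1/2) - of_real L1) < \<delta>"
    and close2: "\<forall>t. norm (ph n (1 + \<epsilon>/2) * Fk \<phi> n t (1 + \<epsilon>/2) - of_real L2) < \<delta>"
    and zt: "poly (paraorth \<phi> n b) (cis t) = 0"
  shows "\<exists>s. poly (paraorth \<phi> n b) (cis s) = 0 \<and> t < s \<and> s < t + 2 * pi * (1 + \<epsilon>) / real n"
proof -
  have np: "real n > 0" using n by simp
  have L1p: "L1 > 0" using L(1) by simp
  have L2n: "L2 < 0"
  proof -
    have "sin (pi * (1 + \<epsilon>/2)) = - sin (pi * \<epsilon> / 2)"
      using sin_periodic_pi[of "pi * \<epsilon> / 2"] by (simp add: algebra_simps)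
    moreover have "sin (pi * \<epsilon> / 2) > 0" using e by (intro sin_gt_zero) auto
    moreover have "pi * (1 + \<epsilon>/2) > 0" using e by simp
    ultimately show ?thesis using L(2) by (simp add: divide_neg_pos)
  qed
  define a1 :: real where "a1 = 1/2"
  define a2 where "a2 = 1 + \<epsilon>/2"
  define s1 where "s1 = 2 * pi * a1 / real n"
  define s2 where "s2 = 2 * pi * a2 / real n"
  obtain c where c: "c \<noteq> 0" "\<forall>z. poly (paraorth \<phi> n b) z = c * (z - cis t) * CD_kernel \<phi> n z (cis t)"
    using kernel_rel[OF n _ zt] by auto
  define \<gamma> where "\<gamma> = csqrt (- cnj b)"
  have g1: "\<gamma>^2 = - cnj b" by (simp add: \<gamma>_def)
  have g2: "norm \<gamma> = 1" using b by (simp add: \<gamma>_def)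
  define V where "V x = cnj \<gamma> * cis (- (real n * x / 2)) * poly (paraorth \<phi> n b) (cis x)" for x
  define R where "R x = Re (V x)" for x
  have VR: "V x = of_real (R x)" for x
  proof -
    have "cnj (V x) = V x" unfolding V_def using n b g1 g2 by (intro v_real) auto
    then have "Im (V x) = 0" by (metis cnj.sel(2) complex_cnj_cancel_iff equation_minus_iff neg_equal_zero)
    then show ?thesis unfolding R_def by (simp add: complex_eq_iff)
  qed
  define \<kappa> where "\<kappa> = CD_kernel \<phi> n (cis t) (cis t)"
  have \<kappa>: "Re \<kappa> > 0" "Im \<kappa> = 0" using K_diag_pos[of n "cis t"] n unfolding \<kappa>_def by auto
  then have \<kappa>nz: "\<kappa> \<noteq> 0" by auto
  define \<Omega> where "\<Omega> = cnj \<gamma> * c * cis (t - real n * t / 2)"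
  have \<Omega>nz: "\<Omega> \<noteq> 0" using c g2 unfolding \<Omega>_def by auto
  define G where "G a = ph n a * Fk \<phi> n t a" for a
  have Vx: "V (t + 2 * pi * a / real n) = \<Omega> * (2 * \<i> * of_real (sin (pi * a / real n))) * \<kappa> * G a" for a
  proof -
    have "V (t + 2 * pi * a / real n) = \<Omega> * (2 * \<i> * of_real (sin (2 * pi * a / real n / 2))) *
         (cis (- ((real n - 1) * (2 * pi * a / real n) / 2)) * CD_kernel \<phi> n (cis (t + 2 * pi * a / real n)) (cis t))"
      unfolding V_def \<Omega>_def by (rule v_formula[OF c(2)])
    also have "CD_kernel \<phi> n (cis (t + 2 * pi * a / real n)) (cis t) = \<kappa> * Fk \<phi> n t a"
      using \<kappa>nz unfolding Fk_def \<kappa>_def by simp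
    also have "cis (- ((real n - 1) * (2 * pi * a / real n) / 2)) = ph n a" by (simp add: ph_def)
    also have "2 * pi * a / real n / 2 = pi * a / real n" by simp
    finally show ?thesis by (simp add: G_def mult_ac)
  qed
  define x1 where "x1 = t + 2 * pi * a1 / real n"
  define x2 where "x2 = t + 2 * pi * a2 / real n"
  have sinpos: "sin (pi * a / real n) > 0" if "0 < a" "a < 2" for a
  proof (rule sin_gt_zero)
    show "0 < pi * a / real n" using that np by simp
    have "a / real n < 1" using that n by (simp add: field_simps)
    then have "pi * (a / real n) < pi * 1" by (intro mult_strict_left_mono) auto
    then show "pi * a / real n < pi" by simp
  qed
  have S1: "sin (pi * a1 / real n) > 0" by (rule sinpos) (auto simp: a1_def)
  have S2: "sin (pi * a2 / real n) > 0" by (rule sinpos) (use e in \<open>auto simp: a2_def\<close>)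
  have reG: "Re (G a1 * cnj (G a2)) < 0"
    using L1p L2n L(3) close1[rule_format, of t] close2[rule_format, of t]
    unfolding G_def a1_def a2_def by (intro re_neg[of L1 L2 \<delta>]) auto
  define P where "P = (cmod \<Omega>)^2 * (4 * sin (pi * a1 / real n) * sin (pi * a2 / real n)) * (cmod \<kappa>)^2"
  have Ppos: "P > 0" unfolding P_def using \<Omega>nz \<kappa>nz S1 S2 by simp
  have prod: "V x1 * cnj (V x2) = of_real P * (G a1 * cnj (G a2))"
  proof -
    have "V x1 * cnj (V x2) = (\<Omega> * cnj \<Omega>) * ((2 * \<i> * of_real (sin (pi * a1 / real n))) * cnj (2 * \<i> * of_real (sin (pi * a2 / real n)))) * (\<kappa> * cnj \<kappa>) * (G a1 * cnj (G a2))"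
      unfolding x1_def x2_def Vx by (simp add: mult_ac)
    also have "\<Omega> * cnj \<Omega> = of_real ((cmod \<Omega>)^2)" by (rule complex_norm_square[symmetric])
    also have "\<kappa> * cnj \<kappa> = of_real ((cmod \<kappa>)^2)" by (rule complex_norm_square[symmetric])
    also have "(2 * \<i> * of_real (sin (pi * a1 / real n))) * cnj (2 * \<i> * of_real (sin (pi * a2 / real n))) =
               of_real (4 * sin (pi * a1 / real n) * sin (pi * a2 / real n))" by simp
    finally show ?thesis unfolding P_def by simp
  qed
  have "R x1 * R x2 < 0"
  proof -
    have "complex_of_real (R x1 * R x2) = V x1 * cnj (V x2)" by (simp add: VR)
    then have "R x1 * R x2 = Re (V x1 * cnj (V x2))" by (metis Re_complex_of_real)
    also have "\<dots> = P * Re (G a1 * cnj (G a2))" unfolding prod by simp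
    also have "\<dots> < 0" using Ppos reG by (simp add: mult_pos_neg)
    finally show ?thesis .
  qed
  moreover have x12: "x1 \<le> x2" unfolding x1_def x2_def a1_def a2_def using np e by (simp add: divide_right_mono)
  moreover have cR: "continuous_on {x1..x2} R"
    unfolding R_def V_def by (intro continuous_intros continuous_on_poly) auto
  ultimately obtain x where x: "x1 \<le> x" "x \<le> x2" "R x = 0"
  proof -
    assume th: "\<And>x. x1 \<le> x \<Longrightarrow> x \<le> x2 \<Longrightarrow> R x = 0 \<Longrightarrow> thesis"
    assume neg: "R x1 * R x2 < 0"
    show thesis
    proof (cases "R x1 < 0")
      case True
      then have "R x2 > 0" using neg by (simp add: mult_less_0_iff)
      then obtain x where "x1 \<le> x" "x \<le> x2" "R x = 0" using IVT'[of R x1 0 x2] True x12 cR by force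
      then show thesis by (rule th)
    next
      case False
      then have "R x1 > 0" "R x2 < 0" using neg by (auto simp: mult_less_0_iff)
      then obtain x where "x1 \<le> x" "x \<le> x2" "R x = 0" using IVT2'[of R x2 0 x1] x12 cR by force
      then show thesis by (rule th)
    qed
  qed
  have "V x = 0" using x(3) VR by simp
  then have "poly (paraorth \<phi> n b) (cis x) = 0" using g2 unfolding V_def by auto
  moreover have "t < x"
  proof -
    have "0 < pi / real n" using np by simp
    moreover have "t + pi / real n \<le> x" using x(1) by (simp add: x1_def a1_def)
    ultimately show ?thesis by linarith
  qed
  moreover have "x < t + 2 * pi * (1 + \<epsilon>) / real n"
  proof -
    have "2 * pi * (1 + \<epsilon> / 2) < 2 * pi * (1 + \<epsilon>)" using e by simp
    then have "2 * pi * (1 + \<epsilon> / 2) / real n < 2 * pi * (1 + \<epsilon>) / real n"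
      using np by (rule divide_strict_right_mono)
    then show ?thesis using x(2) unfolding x2_def a2_def by linarith
  qed
  ultimately show ?thesis by blast
qed

end


lemma Fk_period: "Fk \<phi> n (t - 2 * pi * of_int k) a = Fk \<phi> n t a"
proof -
  have "cis (t - 2 * pi * of_int k + 2 * pi * a / real n) = cis (t + 2 * pi * a / real n)"
    using cis_period[of "t + 2 * pi * a / real n" k] by (simp add: algebra_simps)
  then show ?thesis unfolding Fk_def cis_period by simp
qed

lemma Fk_all:
  assumes U: "\<forall>\<theta>\<in>{0..<2*pi}. \<forall>a\<in>{0..2}. norm (Fk \<phi> n \<theta> a - sine_kernel (of_real a)) < e"
  shows "\<forall>t. \<forall>a\<in>{0..2}. norm (Fk \<phi> n t a - sine_kernel (of_real a)) < e"
proof (intro allI ballI)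
  fix t a assume a: "a \<in> {0..(2::real)}"
  define k where "k = \<lfloor>t / (2 * pi)\<rfloor>"
  define \<theta> where "\<theta> = t - 2 * pi * of_int k"
  have "of_int k \<le> t / (2 * pi)" "t / (2 * pi) < of_int k + 1" unfolding k_def by linarith+
  then have "2 * pi * of_int k \<le> t" "t < 2 * pi * (of_int k + 1)" by (simp_all add: field_simps)
  then have "\<theta> \<in> {0..<2*pi}" unfolding \<theta>_def by (auto simp: algebra_simps)
  then have "norm (Fk \<phi> n \<theta> a - sine_kernel (of_real a)) < e" using U a by blast
  then show "norm (Fk \<phi> n t a - sine_kernel (of_real a)) < e" unfolding \<theta>_def Fk_period .
qed

context opuc begin

lemma zero_exists:
  assumes n: "n \<ge> 2" and b: "norm b = 1"
  shows "\<exists>t. poly (paraorth \<phi> n b) (cis t) = 0"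
proof -
  have dH: "degree (paraorth \<phi> n b) = n" using H_deg(1)[of n b] n by simp
  have nc: "\<not> constant (poly (paraorth \<phi> n b))"
  proof
    assume "constant (poly (paraorth \<phi> n b))"
    then have "degree (paraorth \<phi> n b) = 0" by (simp only: constant_degree)
    then show False using dH n by simp
  qed
  obtain z where z: "poly (paraorth \<phi> n b) z = 0" using fundamental_theorem_of_algebra[OF nc] by blast
  have nz: "norm z = 1" by (rule on_circle[OF n b z])
  then have "z \<noteq> 0" by auto
  then have "cis (Arg z) = sgn z" by (rule cis_Arg)
  also have "\<dots> = z" using nz by (simp add: sgn_div_norm)
  finally have "poly (paraorth \<phi> n b) (cis (Arg z)) = 0" using z by simp
  then show ?thesis by blast
qed

lemma phclose:
  assumes a: "0 < a" "a \<le> 2" and L: "L = sin (pi * a) / (pi * a)" and d: "\<delta> > 0"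
    and U: "\<And>e. e > 0 \<Longrightarrow> eventually (\<lambda>n. \<forall>t. \<forall>a\<in>{0..2}. norm (Fk \<phi> n t a - sine_kernel (of_real a)) < e) sequentially"
  shows "eventually (\<lambda>n. \<forall>t. norm (ph n a * Fk \<phi> n t a - of_real L) < \<delta>) sequentially"
proof -
  have e1: "eventually (\<lambda>n. \<forall>t. \<forall>a\<in>{0..2}. norm (Fk \<phi> n t a - sine_kernel (of_real a)) < \<delta> / 2) sequentially"
    using d by (intro U) simp
  have "(\<lambda>n. pi * a / real n) \<longlonglongrightarrow> 0" by (rule lim_const_over_n)
  then have "(\<lambda>n. cis (pi * a / real n)) \<longlonglongrightarrow> cis 0" by (rule tendsto_cis)
  then have "(\<lambda>n. cis (pi * a / real n)) \<longlonglongrightarrow> 1" by simp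
  moreover have "\<delta> / (2 * (\<bar>L\<bar> + 1)) > 0" using d by (simp add: add_pos_nonneg)
  ultimately have e2: "eventually (\<lambda>n. dist (cis (pi * a / real n)) 1 < \<delta> / (2 * (\<bar>L\<bar> + 1))) sequentially"
    by (rule tendstoD)
  have e3: "eventually (\<lambda>n. n \<ge> 1) sequentially" by (rule eventually_ge_at_top)
  show ?thesis
  proof (rule eventually_mono[OF eventually_conj[OF e1 eventually_conj[OF e2 e3]]], intro allI)
    fix n t
    assume h: "(\<forall>t. \<forall>a\<in>{0..2}. norm (Fk \<phi> n t a - sine_kernel (of_real a)) < \<delta> / 2) \<and>
               dist (cis (pi * a / real n)) 1 < \<delta> / (2 * (\<bar>L\<bar> + 1)) \<and> n \<ge> 1"
    have np: "real n > 0" using h by simp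
    have f: "norm (Fk \<phi> n t a - sine_kernel (of_real a)) < \<delta> / 2" using h a by auto
    have S: "sine_kernel (of_real a) = cis (pi * a) * of_real L" using a L by (simp add: sk_real)
    have pc: "ph n a * cis (pi * a) = cis (pi * a / real n)"
    proof -
      have "ph n a * cis (pi * a) = cis (- ((real n - 1) * (2 * pi * a / real n) / 2) + pi * a)"
        by (simp add: ph_def cis_mult)
      also have "- ((real n - 1) * (2 * pi * a / real n) / 2) + pi * a = pi * a / real n"
        using np by (simp add: field_simps)
      finally show ?thesis .
    qed
    have nph: "norm (ph n a) = 1" by (simp add: ph_def)
    have "ph n a * Fk \<phi> n t a - of_real L =
          ph n a * (Fk \<phi> n t a - sine_kernel (of_real a)) + (cis (pi * a / real n) - 1) * of_real L"
      unfolding S pc[symmetric] by (simp add: algebra_simps)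
    then have "norm (ph n a * Fk \<phi> n t a - of_real L) \<le>
          norm (ph n a * (Fk \<phi> n t a - sine_kernel (of_real a))) + norm ((cis (pi * a / real n) - 1) * of_real L)"
      by (simp only: norm_triangle_ineq)
    also have "norm (ph n a * (Fk \<phi> n t a - sine_kernel (of_real a))) = norm (Fk \<phi> n t a - sine_kernel (of_real a))"
      by (simp only: norm_mult nph mult_1)
    also have "norm ((cis (pi * a / real n) - 1) * of_real L) = norm (cis (pi * a / real n) - 1) * \<bar>L\<bar>"
      by (simp only: norm_mult norm_of_real)
    also have "norm (cis (pi * a / real n) - 1) * \<bar>L\<bar> \<le> \<delta> / (2 * (\<bar>L\<bar> + 1)) * \<bar>L\<bar>"
      using h by (intro mult_right_mono) (auto simp: dist_norm)
    also have "\<delta> / (2 * (\<bar>L\<bar> + 1)) * \<bar>L\<bar> < \<delta> / 2"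
    proof -
      have "\<delta> * \<bar>L\<bar> < \<delta> * (\<bar>L\<bar> + 1)" using d by simp
      then show ?thesis by (simp add: field_simps add_pos_nonneg)
    qed
    finally show "norm (ph n a * Fk \<phi> n t a - of_real L) < \<delta>" using f by linarith
  qed
qed

end



lemma expcis: "exp (\<i> * (complex_of_real \<theta> + 2 * complex_of_real pi * complex_of_real a / of_nat n)) = cis (\<theta> + 2 * pi * a / real n)"
  by (simp add: cis_conv_exp)

lemma expcis0: "exp (\<i> * (complex_of_real \<theta> + 2 * complex_of_real pi * 0 / of_nat n)) = cis \<theta>"
  by (simp add: cis_conv_exp)

lemma expcis1: "exp (\<i> * complex_of_real \<theta>) = cis \<theta>"
  by (simp add: cis_conv_exp)

lemma L_signs:
  assumes e: "0 < \<epsilon>" "\<epsilon> < 1"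
  shows "sin (pi * (1/2)) / (pi * (1/2)) > 0" "sin (pi * (1 + \<epsilon>/2)) / (pi * (1 + \<epsilon>/2)) < 0"
proof -
  show "sin (pi * (1/2)) / (pi * (1/2)) > 0" by simp
  have "sin (pi * (1 + \<epsilon>/2)) = - sin (pi * \<epsilon> / 2)"
    using sin_periodic_pi[of "pi * \<epsilon> / 2"] by (simp add: algebra_simps)
  moreover have "sin (pi * \<epsilon> / 2) > 0" using e by (intro sin_gt_zero) auto
  moreover have "pi * (1 + \<epsilon>/2) > 0" using e by simp
  ultimately show "sin (pi * (1 + \<epsilon>/2)) / (pi * (1 + \<epsilon>/2)) < 0" by (simp add: divide_neg_pos)
qed

theorem mainTheorem6:
  fixes \<mu> :: "complex measure" and \<phi> :: "nat \<Rightarrow> complex poly"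
    and \<beta> :: "nat \<Rightarrow> complex" and \<Theta> :: real and j :: int
  assumes "prob_measure_on_circle \<mu>"
    and "infinite (measure_support \<mu>)"
    and "is_OPUC \<mu> \<phi>"
    and "\<And>C. compact C \<Longrightarrow> C \<subseteq> {w. \<bar>Im w\<bar> < 1/2} \<Longrightarrow>
           uniform_limit ({0..<2*pi} \<times> C \<times> C)
             (\<lambda>n (\<theta>, a, b).
                CD_kernel \<phi> n (exp (\<i> * (of_real \<theta> + 2 * of_real pi * a / of_nat n)))
                               (exp (\<i> * (of_real \<theta> + 2 * of_real pi * b / of_nat n)))
                / CD_kernel \<phi> n (exp (\<i> * of_real \<theta>)) (exp (\<i> * of_real \<theta>)))
             (\<lambda>(\<theta>, a, b). sine_kernel (a - cnj b))
             sequentially"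
    and "\<And>n. norm (\<beta> n) = 1"
  shows "(\<lambda>n. real n * (zero_angle \<phi> \<beta> n \<Theta> (j + 1) - zero_angle \<phi> \<beta> n \<Theta> j))
           \<longlonglongrightarrow> 2 * pi"
proof -
  interpret opuc \<mu> \<phi> using assms(1,3) by unfold_locales
  define C where "C = complex_of_real ` {0..2}"
  have cC: "compact C" unfolding C_def
    by (rule compact_continuous_image[OF continuous_on_of_real[OF continuous_on_id] compact_Icc])
  have sC: "C \<subseteq> {w. \<bar>Im w\<bar> < 1/2}" unfolding C_def by auto
  note UL = assms(4)[OF cC sC, unfolded uniform_limit_iff]
  have U: "eventually (\<lambda>n. \<forall>t. \<forall>a\<in>{0..2}. norm (Fk \<phi> n t a - sine_kernel (of_real a)) < e) sequentially"
    if e: "e > 0" for e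
  proof (rule eventually_mono[OF UL[rule_format, OF e]])
    fix n
    assume h: "\<forall>x\<in>{0..<2 * pi} \<times> C \<times> C.
         dist ((\<lambda>(\<theta>, a, b). CD_kernel \<phi> n (exp (\<i> * (of_real \<theta> + 2 * of_real pi * a / of_nat n)))
                               (exp (\<i> * (of_real \<theta> + 2 * of_real pi * b / of_nat n)))
                / CD_kernel \<phi> n (exp (\<i> * of_real \<theta>)) (exp (\<i> * of_real \<theta>))) x)
              ((\<lambda>(\<theta>, a, b). sine_kernel (a - cnj b)) x) < e"
    have "\<forall>\<theta>\<in>{0..<2*pi}. \<forall>a\<in>{0..2}. norm (Fk \<phi> n \<theta> a - sine_kernel (of_real a)) < e"
    proof (intro ballI)
      fix \<theta> a assume th: "\<theta> \<in> {0..<2*pi}" and a: "a \<in> {0..(2::real)}"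
      have "(\<theta>, complex_of_real a, 0) \<in> {0..<2 * pi} \<times> C \<times> C"
        using th a unfolding C_def by (auto intro: image_eqI[of 0 _ 0])
      then have "dist (CD_kernel \<phi> n (exp (\<i> * (of_real \<theta> + 2 * of_real pi * of_real a / of_nat n)))
                               (exp (\<i> * (of_real \<theta> + 2 * of_real pi * 0 / of_nat n)))
                / CD_kernel \<phi> n (exp (\<i> * of_real \<theta>)) (exp (\<i> * of_real \<theta>)))
              (sine_kernel (of_real a - cnj 0)) < e"
        using h by fastforce
      then show "norm (Fk \<phi> n \<theta> a - sine_kernel (of_real a)) < e"
        unfolding expcis expcis0 expcis1 Fk_def by (simp add: dist_norm)
    qed
    then show "\<forall>t. \<forall>a\<in>{0..2}. norm (Fk \<phi> n t a - sine_kernel (of_real a)) < e"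
      by (rule Fk_all)
  qed
  define D where "D n = zero_angle \<phi> \<beta> n \<Theta> (j + 1) - zero_angle \<phi> \<beta> n \<Theta> j" for n
  have key: "eventually (\<lambda>n. 2 * pi * (1 - \<epsilon>) / real n < D n \<and> D n < 2 * pi * (1 + \<epsilon>) / real n) sequentially"
    if e: "0 < \<epsilon>" "\<epsilon> < 1" for \<epsilon>
  proof -
    define L1 where "L1 = sin (pi * (1/2)) / (pi * (1/2))"
    define L2 where "L2 = sin (pi * (1 + \<epsilon>/2)) / (pi * (1 + \<epsilon>/2))"
    define \<delta> where "\<delta> = min L1 (-L2) / 2"
    have Ls: "L1 > 0" "L2 < 0" unfolding L1_def L2_def using L_signs[OF e] by auto
    have dpos: "\<delta> > 0" using Ls by (simp add: \<delta>_def)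
    have E1: "eventually (\<lambda>n. \<forall>t. \<forall>a\<in>{0..2}. norm (Fk \<phi> n t a - sine_kernel (of_real a)) < \<epsilon> / 3) sequentially"
      using e by (intro U) simp
    have E2: "eventually (\<lambda>n. \<forall>t. norm (ph n (1/2) * Fk \<phi> n t (1/2) - of_real L1) < \<delta>) sequentially"
      by (rule phclose[OF _ _ L1_def dpos U]) auto
    have E3: "eventually (\<lambda>n. \<forall>t. norm (ph n (1 + \<epsilon>/2) * Fk \<phi> n t (1 + \<epsilon>/2) - of_real L2) < \<delta>) sequentially"
      by (rule phclose[OF _ _ L2_def dpos U]) (use e in auto)
    have E4: "eventually (\<lambda>n. n \<ge> 2) sequentially" by (rule eventually_ge_at_top)
    show ?thesis
    proof (rule eventually_mono[OF eventually_conj[OF E1 eventually_conj[OF E2 eventually_conj[OF E3 E4]]]])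
      fix n
      assume h: "(\<forall>t. \<forall>a\<in>{0..2}. norm (Fk \<phi> n t a - sine_kernel (of_real a)) < \<epsilon> / 3) \<and>
                 (\<forall>t. norm (ph n (1/2) * Fk \<phi> n t (1/2) - of_real L1) < \<delta>) \<and>
                 (\<forall>t. norm (ph n (1 + \<epsilon>/2) * Fk \<phi> n t (1 + \<epsilon>/2) - of_real L2) < \<delta>) \<and> n \<ge> 2"
      have n: "n \<ge> 2" using h by simp
      have np: "real n > 0" using n by simp
      define b where "b = \<beta> (n - 1)"
      have b: "norm b = 1" unfolding b_def by (rule assms(5))
      define Z where "Z = zero_angles \<phi> \<beta> n"
      have memZ: "t \<in> Z \<longleftrightarrow> poly (paraorth \<phi> n b) (cis t) = 0" for t
        unfolding Z_def zero_angles_def b_def by (simp add: expcis1)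
      have zs: "zset Z (2 * pi * (1 - \<epsilon>) / real n) (2 * pi * (1 + \<epsilon>) / real n)"
      proof
        show "0 < 2 * pi * (1 - \<epsilon>) / real n" using e np by simp
        show "t + 2 * pi * (1 - \<epsilon>) / real n < s" if "t \<in> Z" "s \<in> Z" "t < s" for t s
          using gapA[OF n b e(1) _ _ _ _ \<open>t < s\<close>] that h e unfolding memZ by auto
        show "\<exists>s\<in>Z. t < s \<and> s < t + 2 * pi * (1 + \<epsilon>) / real n" if "t \<in> Z" for t
        proof -
          have c1: "\<forall>t. norm (ph n (1/2) * Fk \<phi> n t (1/2) - of_real L1) < \<delta>" using h by blast
          have c2: "\<forall>t. norm (ph n (1 + \<epsilon>/2) * Fk \<phi> n t (1 + \<epsilon>/2) - of_real L2) < \<delta>" using h by blast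
          have zt: "poly (paraorth \<phi> n b) (cis t) = 0" using that memZ by blast
          obtain s where "poly (paraorth \<phi> n b) (cis s) = 0" "t < s" "s < t + 2 * pi * (1 + \<epsilon>) / real n"
            using gapB[OF n b e L1_def L2_def \<delta>_def c1 c2 zt] by blast
          then show ?thesis using memZ by blast
        qed
        show "\<exists>t\<in>Z. t < x" for x
        proof -
          obtain t0 where t0: "poly (paraorth \<phi> n b) (cis t0) = 0" using zero_exists[OF n b] by blast
          define k where "k = \<lceil>(t0 - x) / (2 * pi)\<rceil> + 1"
          have "(t0 - x) / (2 * pi) < of_int k" unfolding k_def by linarith
          then have "t0 - x < 2 * pi * of_int k" by (simp add: field_simps)
          then have "t0 - 2 * pi * of_int k < x" by simp
          moreover have "t0 - 2 * pi * of_int k \<in> Z" unfolding memZ cis_period using t0 .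
          ultimately show ?thesis by blast
        qed
      qed
      have "D n = (THE t. PP Z \<Theta> (j + 1) t) - (THE t. PP Z \<Theta> j t)"
        unfolding D_def zero_angle_PP Z_def ..
      then show "2 * pi * (1 - \<epsilon>) / real n < D n \<and> D n < 2 * pi * (1 + \<epsilon>) / real n"
        using zset.spacing[OF zs, of \<Theta> j] by simp
    qed
  qed
  show ?thesis
  proof (rule tendstoI)
    fix e :: real assume e: "e > 0"
    define \<epsilon> where "\<epsilon> = min (1/2) (e / (4 * pi))"
    have e1: "0 < \<epsilon>" "\<epsilon> < 1" using e by (auto simp: \<epsilon>_def)
    have e2: "2 * pi * \<epsilon> < e"
    proof -
      have "2 * pi * \<epsilon> \<le> 2 * pi * (e / (4 * pi))" unfolding \<epsilon>_def by (intro mult_left_mono) auto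
      also have "\<dots> = e / 2" by simp
      finally show ?thesis using e by simp
    qed
    show "eventually (\<lambda>n. dist (real n * (zero_angle \<phi> \<beta> n \<Theta> (j + 1) - zero_angle \<phi> \<beta> n \<Theta> j)) (2 * pi) < e) sequentially"
    proof (rule eventually_mono[OF eventually_conj[OF key[OF e1] eventually_ge_at_top[of 1]]])
      fix n :: nat
      assume h: "(2 * pi * (1 - \<epsilon>) / real n < D n \<and> D n < 2 * pi * (1 + \<epsilon>) / real n) \<and> 1 \<le> n"
      have np: "real n > 0" using h by simp
      have "2 * pi * (1 - \<epsilon>) < real n * D n" using h np by (simp add: field_simps)
      moreover have "real n * D n < 2 * pi * (1 + \<epsilon>)" using h np by (simp add: field_simps)
      ultimately have "\<bar>real n * D n - 2 * pi\<bar> < 2 * pi * \<epsilon>" by (simp add: algebra_simps abs_less_iff)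
      then show "dist (real n * (zero_angle \<phi> \<beta> n \<Theta> (j + 1) - zero_angle \<phi> \<beta> n \<Theta> j)) (2 * pi) < e"
        using e2 unfolding D_def dist_real_def by simp
    qed
  qed
qed


end
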